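(* Let $\mathcal D$ be a finite nonempty set. There exists a unique bilinear form $(\,,\,)$ on $\mathcal H^{\mathcal D}_{P,R}$ such that: (1) $(1,x)=\varepsilon(x)$ for all $x$; (2) $(x_1x_2,y)=(x_1\otimes x_2,\Delta(y))$ for all $x_1,x_2,y$ (where $(a\otimes b,c\otimes d)=(a,c)(b,d)$); (3) $(B_d^+(x),y)=(x,\gamma_d(y))$ for all $x,y$ and $d\in\mathcal D$. Moreover this form satisfies: (4) $(x,y)=0$ if $x,y$ are homogeneous of different weights; (5) it is symmetric and nondegenerate; (6) $(S(x),y)=(x,S(y))$ for all $x,y$, $S$ the antipode; (7) letting $(e_F)_{F}$ be the basis of $\mathcal H^{\mathcal D}_{P,R}$ indexed by planar forests defined by $(e_F,G)=\delta_{F,G}$ for all forests $G$: (a) $e_F$ is homogeneous of weight equal to the weight of $F$; (b) $(e_t)_{t}$, $t$ running over the decorated planar rooted trees, is a basis of the space of primitive elements of $\mathcal H^{\mathcal D}_{P,R}$; (c) for every forest $t_1\cdots t_n$, $\Delta(e_{t_1\cdots t_n})=\sum_{i=0}^ne_{t_1\cdots t_i}\otimes e_{t_{i+1}\cdots t_n}$.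
   Context: $\mathcal H^{\mathcal D}_{P,R}$ is the free associative unital $\mathbb Q$-algebra on the set of planar rooted trees (finite trees with a root, embedded in the plane, edges oriented away from the root) decorated by $\mathcal D$; its basis is the set of planar forests $t_1\cdots t_n$ ($1$ = empty forest), graded by weight (number of vertices). Coproduct: $\Delta(F)=\sum_cP^c(F)\otimes R^c(F)$ over all cuts $c=(c_i)$ of $F=t_1\cdots t_n$, each $c_i$ being the empty cut of $t_i$ ($P=1,R=t_i$), the total cut ($P=t_i,R=1$), or an admissible cut (a nonempty set of edges of $t_i$ such that every oriented path meets at most one of them, with $R^{c_i}(t_i)$ the component of the root and $P^{c_i}(t_i)$ the left-to-right planar forest of the other components); $P^c(F)=\prod_iP^{c_i}(t_i)$, $R^c(F)=\prod_iR^{c_i}(t_i)$. Counit $\varepsilon(F)=0$ for $F\neq1$, $\varepsilon(1)=1$. This is a Hopf algebra with antipode $S$. $B_d^+$ grafts $t_1\cdots t_n$ (in this order) on a new root decorated by $d$; $\bullet_d=B_d^+(1)$. The linear map $\gamma_d$ is given by $\gamma_d(1)=0$, $\gamma_d(t_1\cdots t_n)=t_1\cdots t_{n-1}$ if $t_n=\bullet_d$, and $0$ otherwise. *)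

theory Defs
  imports Complex_Main "HOL-Library.Poly_Mapping"
begin

text \<open>A planar forest is a list of trees; [] is the
  empty forest 1. The decoration set D is the finite (nonempty) type 'd.\<close>

datatype 'd ptree = Node 'd "'d ptree list"

type_synonym 'd forest = "'d ptree list"

fun weight_t :: "'d ptree \<Rightarrow> nat" where
  "weight_t (Node d ts) = Suc (sum_list (map weight_t ts))"

definition weight :: "'d forest \<Rightarrow> nat" where
  "weight F = sum_list (map weight_t F)"

fun combine_cuts :: "('d forest \<times> 'd forest) list list \<Rightarrow> ('d forest \<times> 'd forest) list" where
  "combine_cuts [] = [([], [])]"
| "combine_cuts (cs # css) =
     concat (map (\<lambda>(p, r). map (\<lambda>(p', r'). (p @ p', r @ r')) (combine_cuts css)) cs)"

text \<open>All cuts of a tree t (empty, total, admissible), listed as pairs (P^c(t), R^c(t)),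
  one list entry per cut. The non-total cuts of
  Node d [t1..tk] correspond bijectively to choosing, for each child ti, either to cut the
  edge to ti (= total cut of ti: ti goes into P, nothing of it stays on the trunk) or not
  to cut it (= a non-total cut of ti); admissibility is exactly this condition.
  P is the left-to-right forest of the cut-off components, R = Node d (trunk parts).\<close>
fun cuts :: "'d ptree \<Rightarrow> ('d forest \<times> 'd forest) list" where
  "cuts (Node d ts) =
     ([Node d ts], []) # map (\<lambda>(p, r). (p, [Node d r])) (combine_cuts (map cuts ts))"

definition cuts_forest :: "'d forest \<Rightarrow> ('d forest \<times> 'd forest) list" where
  "cuts_forest F = combine_cuts (map cuts F)"

type_synonym 'd H = "'d forest \<Rightarrow>\<^sub>0 rat"
type_synonym 'd HH = "('d forest \<times> 'd forest) \<Rightarrow>\<^sub>0 rat"   \<comment> \<open>H \<otimes> H\<close>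

definition smult :: "rat \<Rightarrow> ('a \<Rightarrow>\<^sub>0 rat) \<Rightarrow> ('a \<Rightarrow>\<^sub>0 rat)" where
  "smult c x = Poly_Mapping.map (\<lambda>v. c * v) x"

definition basis :: "'d forest \<Rightarrow> 'd H" where
  "basis F = Poly_Mapping.single F 1"

definition one :: "'d H" where
  "one = basis []"

definition mult :: "'d H \<Rightarrow> 'd H \<Rightarrow> 'd H" where
  "mult x y = (\<Sum>F\<in>Poly_Mapping.keys x. \<Sum>G\<in>Poly_Mapping.keys y.
       Poly_Mapping.single (F @ G) (Poly_Mapping.lookup x F * Poly_Mapping.lookup y G))"

definition tensor :: "'d H \<Rightarrow> 'd H \<Rightarrow> 'd HH" where
  "tensor x y = (\<Sum>F\<in>Poly_Mapping.keys x. \<Sum>G\<in>Poly_Mapping.keys y.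
       Poly_Mapping.single (F, G) (Poly_Mapping.lookup x F * Poly_Mapping.lookup y G))"

definition Delta :: "'d H \<Rightarrow> 'd HH" where
  "Delta x = (\<Sum>F\<in>Poly_Mapping.keys x. smult (Poly_Mapping.lookup x F)
       (sum_list (map (\<lambda>c. Poly_Mapping.single c 1) (cuts_forest F))))"

definition eps :: "'d H \<Rightarrow> rat" where
  "eps x = Poly_Mapping.lookup x []"

definition Bplus :: "'d \<Rightarrow> 'd H \<Rightarrow> 'd H" where
  "Bplus d x = (\<Sum>F\<in>Poly_Mapping.keys x. Poly_Mapping.single [Node d F] (Poly_Mapping.lookup x F))"

definition gamma :: "'d \<Rightarrow> 'd H \<Rightarrow> 'd H" where
  "gamma d x = (\<Sum>F\<in>Poly_Mapping.keys x.
       if F \<noteq> [] \<and> last F = Node d [] then Poly_Mapping.single (butlast F) (Poly_Mapping.lookup x F)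
       else 0)"

definition linear_map :: "(('a \<Rightarrow>\<^sub>0 rat) \<Rightarrow> ('b \<Rightarrow>\<^sub>0 rat)) \<Rightarrow> bool" where
  "linear_map f \<longleftrightarrow> (\<forall>x y. f (x + y) = f x + f y) \<and> (\<forall>c x. f (smult c x) = smult c (f x))"

definition conv :: "('d H \<Rightarrow> 'd H) \<Rightarrow> ('d H \<Rightarrow> 'd H) \<Rightarrow> 'd H \<Rightarrow> 'd H" where
  "conv f g x = (\<Sum>pr\<in>Poly_Mapping.keys (Delta x).
       smult (Poly_Mapping.lookup (Delta x) pr) (mult (f (basis (fst pr))) (g (basis (snd pr)))))"

definition is_antipode :: "('d H \<Rightarrow> 'd H) \<Rightarrow> bool" where
  "is_antipode S \<longleftrightarrow> linear_map S \<and>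
     (\<forall>x. conv S id x = smult (eps x) one) \<and> (\<forall>x. conv id S x = smult (eps x) one)"

definition antipode :: "'d H \<Rightarrow> 'd H" where
  "antipode = (THE S. is_antipode S)"

definition primitive :: "'d H \<Rightarrow> bool" where
  "primitive x \<longleftrightarrow> Delta x = tensor x one + tensor one x"

definition homogeneous :: "nat \<Rightarrow> 'd H \<Rightarrow> bool" where
  "homogeneous n x \<longleftrightarrow> (\<forall>F\<in>Poly_Mapping.keys x. weight F = n)"

definition bilinear_form :: "('d H \<Rightarrow> 'd H \<Rightarrow> rat) \<Rightarrow> bool" where
  "bilinear_form B \<longleftrightarrow>
     (\<forall>x y z. B (x + y) z = B x z + B y z) \<and> (\<forall>c x z. B (smult c x) z = c * B x z) \<and>
     (\<forall>x y z. B z (x + y) = B z x + B z y) \<and> (\<forall>c x z. B z (smult c x) = c * B z x)"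

definition pair2 :: "('d H \<Rightarrow> 'd H \<Rightarrow> rat) \<Rightarrow> 'd H \<Rightarrow> 'd H \<Rightarrow> 'd HH \<Rightarrow> rat" where
  "pair2 B x1 x2 T = (\<Sum>pr\<in>Poly_Mapping.keys T.
       Poly_Mapping.lookup T pr * B x1 (basis (fst pr)) * B x2 (basis (snd pr)))"

definition form_axioms :: "('d H \<Rightarrow> 'd H \<Rightarrow> rat) \<Rightarrow> bool" where
  "form_axioms B \<longleftrightarrow> bilinear_form B \<and>
     (\<forall>x. B one x = eps x) \<and>
     (\<forall>x1 x2 y. B (mult x1 x2) y = pair2 B x1 x2 (Delta y)) \<and>
     (\<forall>d x y. B (Bplus d x) y = B x (gamma d y))"

definition lincomb :: "('i \<Rightarrow>\<^sub>0 rat) \<Rightarrow> ('i \<Rightarrow> 'd H) \<Rightarrow> 'd H" where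
  "lincomb c e = (\<Sum>i\<in>Poly_Mapping.keys c. smult (Poly_Mapping.lookup c i) (e i))"

definition is_basis_of :: "'d H set \<Rightarrow> ('i \<Rightarrow> 'd H) \<Rightarrow> bool" where
  "is_basis_of V e \<longleftrightarrow> (\<forall>i. e i \<in> V) \<and> (\<forall>x\<in>V. \<exists>!c. x = lincomb c e)"

end

theory Submission
  imports Defs
begin


abbreviation cf where "cf \<equiv> cuts_forest"

definition pc :: "('a list \<times> 'b list) list \<Rightarrow> ('a list \<times> 'b list) list \<Rightarrow> ('a list \<times> 'b list) list" where
  "pc A B = concat (map (\<lambda>(p, r). map (\<lambda>(p', r'). (p @ p', r @ r')) B) A)"

lemma cf_Nil[simp]: "cf [] = [([], [])]"
  by (simp add: cuts_forest_def)

lemma cf_Cons: "cf (t # G) = pc (cuts t) (cf G)"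
  by (simp add: cuts_forest_def pc_def)

lemma sum_list_concat_map: "sum_list (map f (concat (map g X))) = sum_list (map (\<lambda>x. sum_list (map f (g x))) X)"
  by (induction X) auto

lemma SL_pc: "sum_list (map h (pc A B)) = sum_list (map (\<lambda>(p,r). sum_list (map (\<lambda>(p',r'). h (p @ p', r @ r')) B)) A)"
  unfolding pc_def sum_list_concat_map
  by (rule arg_cong[where f=sum_list], rule map_cong, auto simp: case_prod_beta comp_def intro!: arg_cong[where f=sum_list])

lemma SL_swap: fixes h :: "'a \<Rightarrow> 'b \<Rightarrow> 'c::comm_monoid_add" shows "sum_list (map (\<lambda>x. sum_list (map (\<lambda>y. h x y) Y)) X) = sum_list (map (\<lambda>y. sum_list (map (\<lambda>x. h x y) X)) Y)"
proof (induction X)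
  case Nil then show ?case by (induction Y) auto
next
  case (Cons a X)
  have "(\<Sum>y\<leftarrow>Y. h a y + (\<Sum>x\<leftarrow>X. h x y)) = (\<Sum>y\<leftarrow>Y. h a y) + (\<Sum>y\<leftarrow>Y. \<Sum>x\<leftarrow>X. h x y)"
    by (rule sum_list_addf)
  then show ?case using Cons by simp
qed

lemma cf_append: fixes h :: "_ \<Rightarrow> 'c::comm_monoid_add" shows "sum_list (map h (cf (F @ G))) = sum_list (map (\<lambda>(p,r). sum_list (map (\<lambda>(p',r'). h (p @ p', r @ r')) (cf G))) (cf F))"
proof (induction F arbitrary: h)
  case Nil then show ?case by simp
next
  case (Cons t F)
  show ?case
    apply (simp add: cf_Cons SL_pc)
    apply (subst Cons)
    apply (simp add: case_prod_beta)
    done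
qed

lemma SL_zero[simp]: "sum_list (map (\<lambda>x. 0) L) = 0"
  by (induction L) auto

lemma pc_unit: "pc A [([], [])] = A"
  by (induction A) (auto simp: pc_def)

lemma cf_single[simp]: "cf [t] = cuts t"
  by (simp add: cf_Cons pc_unit)

lemma weight_Nil[simp]: "weight [] = 0" by (simp add: weight_def)
lemma weight_Cons[simp]: "weight (t # F) = weight_t t + weight F" by (simp add: weight_def)
lemma weight_append[simp]: "weight (F @ G) = weight F + weight G" by (simp add: weight_def)
lemma weight_t_pos: "weight_t t > 0" by (cases t) auto
lemma weight_t_ne0[simp]: "weight_t t \<noteq> 0" by (cases t) auto
lemma weight_t_Node[simp]: "weight_t (Node d ts) = Suc (weight ts)" by (simp add: weight_def)
declare weight_t.simps[simp del]
lemma weight_eq_0[simp]: "weight F = 0 \<longleftrightarrow> F = []"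
  by (cases F) auto

lemma forest_induct[case_names Nil Node Cons]:
  assumes "P []" "\<And>d ts. P ts \<Longrightarrow> P [Node d ts]" "\<And>t G. G \<noteq> [] \<Longrightarrow> P [t] \<Longrightarrow> P G \<Longrightarrow> P (t # G)"
  shows "P F"
proof (induction F rule: measure_induct_rule[of weight])
  case (less F)
  show ?case
  proof (cases F)
    case Nil then show ?thesis using assms(1) by simp
  next
    case (Cons t G)
    show ?thesis
    proof (cases "G = []")
      case True
      obtain d ts where t: "t = Node d ts" by (cases t)
      have "P ts" using less[of ts] Cons True t by simp
      then show ?thesis using assms(2) Cons True t by simp
    next
      case False
      have "0 < weight G" using False by (simp add: zero_less_iff_neq_zero)
      then have "P [t]" using less[of "[t]"] Cons by simp
      moreover have "P G" using less[of G] Cons by (simp add: weight_t_pos)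
      ultimately show ?thesis using assms(3) Cons False by simp
    qed
  qed
qed

lemma cuts_Node: "cuts (Node d ts) = ([Node d ts], []) # map (\<lambda>(p, r). (p, [Node d r])) (cf ts)"
  by (simp add: cuts_forest_def)

declare cuts.simps[simp del]

lemma cf_Cons': "cf (t # G) = cf ([t] @ G)" by simp

lemma cf_weight: "(p, r) \<in> set (cf F) \<Longrightarrow> weight p + weight r = weight F"
proof (induction F arbitrary: p r rule: forest_induct)
  case Nil then show ?case by simp
next
  case (Node d ts) then show ?case by (auto simp: cuts_Node)
next
  case (Cons t G)
  from Cons.prems obtain p1 r1 p2 r2 where "(p1, r1) \<in> set (cuts t)" "(p2, r2) \<in> set (cf G)" "p = p1 @ p2" "r = r1 @ r2"
    by (auto simp: cf_Cons pc_def)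
  then show ?case using Cons.IH(1)[of p1 r1] Cons.IH(2)[of p2 r2] by simp
qed

lemma cf_counitL: fixes g :: "_ \<Rightarrow> 'c::comm_monoid_add"
  shows "sum_list (map (\<lambda>(p, r). if p = [] then g r else 0) (cf F)) = g F"
proof (induction F arbitrary: g rule: forest_induct)
  case Nil then show ?case by simp
next
  case (Node d ts)
  have "map (\<lambda>(p,r). if p = [] then g r else 0) (cuts (Node d ts)) = 0 # map (\<lambda>(p,r). if p = [] then g [Node d r] else 0) (cf ts)"
    by (auto simp: cuts_Node)
  then show ?case by (simp add: Node)
next
  case (Cons t G)
  have inner: "sum_list (map (\<lambda>(p', r'). if p @ p' = [] then g (r @ r') else 0) (cf G)) = (if p = [] then g (r @ G) else 0)" for p r
    using Cons.IH(2)[of "\<lambda>r'. g (r @ r')"] by (cases "p = []") (auto simp: split_def)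
  show ?case
    apply (subst cf_Cons', subst cf_append)
    apply (simp only: prod.case inner)
    using Cons.IH(1)[of "\<lambda>r. g (r @ G)"] by simp
qed

lemma cf_counitR: fixes g :: "_ \<Rightarrow> 'c::comm_monoid_add"
  shows "sum_list (map (\<lambda>(p, r). if r = [] then g p else 0) (cf F)) = g F"
proof (induction F arbitrary: g rule: forest_induct)
  case Nil then show ?case by simp
next
  case (Node d ts)
  show ?case by (simp add: cuts_Node case_prod_beta comp_def)
next
  case (Cons t G)
  have inner: "sum_list (map (\<lambda>(p', r'). if r @ r' = [] then g (p @ p') else 0) (cf G)) = (if r = [] then g (p @ G) else 0)" for p r
    using Cons.IH(2)[of "\<lambda>p'. g (p @ p')"] by (cases "r = []") (auto simp: split_def)
  show ?case
    apply (subst cf_Cons', subst cf_append)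
    apply (simp only: prod.case inner)
    using Cons.IH(1)[of "\<lambda>p. g (p @ G)"] by simp
qed

lemma cf_coassoc: fixes f :: "_ \<Rightarrow> _ \<Rightarrow> _ \<Rightarrow> 'c::comm_monoid_add"
  shows "sum_list (map (\<lambda>(p,r). sum_list (map (\<lambda>(a,b). f a b r) (cf p))) (cf F))
       = sum_list (map (\<lambda>(p,r). sum_list (map (\<lambda>(a,b). f p a b) (cf r))) (cf F))"
proof (induction F arbitrary: f rule: forest_induct)
  case Nil then show ?case by simp
next
  case (Node d ts)
  have IH: "sum_list (map (\<lambda>(p,r). sum_list (map (\<lambda>(a,b). f a b [Node d r]) (cf p))) (cf ts))
       = sum_list (map (\<lambda>(p,r). sum_list (map (\<lambda>(a,b). f p a [Node d b]) (cf r))) (cf ts))"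
    using Node[of "\<lambda>a b r. f a b [Node d r]"] by simp
  show ?case using IH by (simp add: cuts_Node split_def sum_list_addf comp_def add.assoc)
next
  case (Cons t G)
  let ?S = "\<lambda>L h. sum_list (map h L)"
  have "?S (cf (t # G)) (\<lambda>(p,r). ?S (cf p) (\<lambda>(a,b). f a b r))
    = ?S (cf [t]) (\<lambda>(p1,r1). ?S (cf G) (\<lambda>(p2,r2). ?S (cf p1) (\<lambda>(a1,b1). ?S (cf p2) (\<lambda>(a2,b2). f (a1@a2) (b1@b2) (r1@r2)))))"
    by (subst cf_Cons', subst cf_append) (simp add: cf_append split_def)
  also have "\<dots> = ?S (cf [t]) (\<lambda>(p1,r1). ?S (cf p1) (\<lambda>(a1,b1). ?S (cf G) (\<lambda>(p2,r2). ?S (cf p2) (\<lambda>(a2,b2). f (a1@a2) (b1@b2) (r1@r2)))))"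
    by (simp add: split_def SL_swap[where X="cf G"])
  also have "\<dots> = ?S (cf [t]) (\<lambda>(p1,r1). ?S (cf p1) (\<lambda>(a1,b1). ?S (cf G) (\<lambda>(p2,r2). ?S (cf r2) (\<lambda>(a2,b2). f (a1@p2) (b1@a2) (r1@b2)))))"
  proof -
    have inner: "?S (cf G) (\<lambda>(p2,r2). ?S (cf p2) (\<lambda>(a2,b2). f (x@a2) (y@b2) (z@r2))) = ?S (cf G) (\<lambda>(p2,r2). ?S (cf r2) (\<lambda>(a2,b2). f (x@p2) (y@a2) (z@b2)))" for x y z
      using Cons.IH(2)[of "\<lambda>a2 b2 r2. f (x@a2) (y@b2) (z@r2)"] by simp
    show ?thesis by (simp only: inner)
  qed
  also have "\<dots> = ?S (cf [t]) (\<lambda>(p1,r1). ?S (cf r1) (\<lambda>(a1,b1). ?S (cf G) (\<lambda>(p2,r2). ?S (cf r2) (\<lambda>(a2,b2). f (p1@p2) (a1@a2) (b1@b2)))))"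
    using Cons.IH(1)[of "\<lambda>a1 b1 r1. ?S (cf G) (\<lambda>(p2,r2). ?S (cf r2) (\<lambda>(a2,b2). f (a1@p2) (b1@a2) (r1@b2)))"]
    by (simp add: split_def)
  also have "\<dots> = ?S (cf [t]) (\<lambda>(p1,r1). ?S (cf G) (\<lambda>(p2,r2). ?S (cf r1) (\<lambda>(a1,b1). ?S (cf r2) (\<lambda>(a2,b2). f (p1@p2) (a1@a2) (b1@b2)))))"
    by (simp add: split_def SL_swap[where Y="cf G"])
  also have "\<dots> = ?S (cf (t # G)) (\<lambda>(p,r). ?S (cf r) (\<lambda>(a,b). f p a b))"
    by (subst cf_Cons', subst cf_append) (simp add: cf_append split_def)
  finally show ?case .
qed


subsection \<open>Linear algebra on poly_mappings\<close>

abbreviation lk where "lk \<equiv> Poly_Mapping.lookup"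
abbreviation ks where "ks \<equiv> Poly_Mapping.keys"


lemma lookup_smult[simp]: "lk (smult c x) k = c * lk x k"
  by (simp add: smult_def Poly_Mapping.map.rep_eq when_def)

lemma smult_zero[simp]: "smult c 0 = 0"
  by (rule poly_mapping_eqI) simp
lemma smult_zero_left[simp]: "smult 0 x = 0"
  by (rule poly_mapping_eqI) simp
lemma smult_one[simp]: "smult 1 x = x"
  by (rule poly_mapping_eqI) simp
lemma smult_add: "smult c (x + y) = smult c x + smult c y"
  by (rule poly_mapping_eqI) (simp add: lookup_add algebra_simps)
lemma smult_add_left: "smult (a + b) x = smult a x + smult b x"
  by (rule poly_mapping_eqI) (simp add: lookup_add algebra_simps)
lemma smult_smult[simp]: "smult a (smult b x) = smult (a * b) x"
  by (rule poly_mapping_eqI) simp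
lemma smult_single[simp]: "smult c (Poly_Mapping.single k v) = Poly_Mapping.single k (c * v)"
  by (rule poly_mapping_eqI) (simp add: lookup_single when_def)
lemma smult_sum: "smult c (sum f A) = (\<Sum>a\<in>A. smult c (f a))"
  by (rule poly_mapping_eqI) (simp add: lookup_sum sum_distrib_left)
lemma smult_sum_list: "smult c (sum_list (map f L)) = sum_list (map (\<lambda>a. smult c (f a)) L)"
  by (induction L) (auto simp: smult_add)
lemma smult_minus: "smult c (x - y) = smult c x - smult c y"
  by (rule poly_mapping_eqI) (simp add: lookup_minus algebra_simps)
lemma smult_uminus_left: "smult (- c) x = - smult c x"
  by (rule poly_mapping_eqI) simp
lemma smult_uminus: "smult c (- x) = - smult c x"
  by (rule poly_mapping_eqI) simp

lemma lookup_basis: "lk (basis F) G = (if F = G then 1 else 0)"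
  by (simp add: basis_def lookup_single when_def)

lemma single_as_smult: "Poly_Mapping.single k c = smult c (basis k)"
  by (simp add: basis_def)

lemma sum_keys_superset:
  assumes "finite S" "ks x \<subseteq> S" "\<And>k. h k 0 = 0"
  shows "(\<Sum>k\<in>ks x. h k (lk x k)) = (\<Sum>k\<in>S. h k (lk x k))"
  by (rule sum.mono_neutral_left) (use assms in \<open>auto simp: in_keys_iff\<close>)

definition lext :: "('k \<Rightarrow> ('m \<Rightarrow>\<^sub>0 rat)) \<Rightarrow> ('k \<Rightarrow>\<^sub>0 rat) \<Rightarrow> ('m \<Rightarrow>\<^sub>0 rat)" where
  "lext g x = (\<Sum>k\<in>ks x. smult (lk x k) (g k))"

definition sext :: "('k \<Rightarrow> rat) \<Rightarrow> ('k \<Rightarrow>\<^sub>0 rat) \<Rightarrow> rat" where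
  "sext g x = (\<Sum>k\<in>ks x. lk x k * g k)"

lemma lext_superset: "finite S \<Longrightarrow> ks x \<subseteq> S \<Longrightarrow> lext g x = (\<Sum>k\<in>S. smult (lk x k) (g k))"
  unfolding lext_def by (rule sum_keys_superset[where h="\<lambda>k c. smult c (g k)"]) auto

lemma sext_superset: "finite S \<Longrightarrow> ks x \<subseteq> S \<Longrightarrow> sext g x = (\<Sum>k\<in>S. lk x k * g k)"
  unfolding sext_def by (rule sum_keys_superset[where h="\<lambda>k c. c * g k"]) auto

lemma lext_add: "lext g (x + y) = lext g x + lext g y"
proof -
  let ?S = "ks x \<union> ks y"
  have f: "finite ?S" by simp
  have "lext g (x + y) = (\<Sum>k\<in>?S. smult (lk (x+y) k) (g k))"
    by (rule lext_superset[OF f]) (simp add: keys_add)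
  also have "\<dots> = (\<Sum>k\<in>?S. smult (lk x k) (g k)) + (\<Sum>k\<in>?S. smult (lk y k) (g k))"
    by (simp add: lookup_add smult_add_left sum.distrib)
  also have "\<dots> = lext g x + lext g y"
    by (simp add: lext_superset[OF f])
  finally show ?thesis .
qed

lemma sext_add: "sext g (x + y) = sext g x + sext g y"
proof -
  let ?S = "ks x \<union> ks y"
  have f: "finite ?S" by simp
  have "sext g (x + y) = (\<Sum>k\<in>?S. lk (x+y) k * g k)"
    by (rule sext_superset[OF f]) (simp add: keys_add)
  also have "\<dots> = (\<Sum>k\<in>?S. lk x k * g k) + (\<Sum>k\<in>?S. lk y k * g k)"
    by (simp add: lookup_add algebra_simps sum.distrib)
  also have "\<dots> = sext g x + sext g y"
    by (simp add: sext_superset[OF f])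
  finally show ?thesis .
qed

lemma keys_smult: "ks (smult c x) \<subseteq> ks x"
  by (auto simp: in_keys_iff)

lemma lext_smult: "lext g (smult c x) = smult c (lext g x)"
proof -
  have "lext g (smult c x) = (\<Sum>k\<in>ks x. smult (lk (smult c x) k) (g k))"
    by (rule lext_superset) (auto simp: keys_smult)
  then show ?thesis by (simp add: lext_def smult_sum)
qed

lemma sext_smult: "sext g (smult c x) = c * sext g x"
proof -
  have "sext g (smult c x) = (\<Sum>k\<in>ks x. lk (smult c x) k * g k)"
    by (rule sext_superset) (auto simp: keys_smult)
  then show ?thesis by (simp add: sext_def sum_distrib_left mult.assoc)
qed

lemma lext_zero[simp]: "lext g 0 = 0" by (simp add: lext_def)
lemma sext_zero[simp]: "sext g 0 = 0" by (simp add: sext_def)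

lemma lext_single[simp]: "lext g (Poly_Mapping.single k c) = smult c (g k)"
  by (cases "c = 0") (simp_all add: lext_def)
lemma sext_single[simp]: "sext g (Poly_Mapping.single k c) = c * g k"
  by (cases "c = 0") (simp_all add: sext_def)
lemma lext_basis[simp]: "lext g (basis k) = g k"
  by (simp add: basis_def)
lemma sext_basis[simp]: "sext g (basis k) = g k"
  by (simp add: basis_def)

lemma lext_sum: "lext g (sum f A) = (\<Sum>a\<in>A. lext g (f a))"
  by (induction A rule: infinite_finite_induct) (auto simp: lext_add)
lemma sext_sum: "sext g (sum f A) = (\<Sum>a\<in>A. sext g (f a))"
  by (induction A rule: infinite_finite_induct) (auto simp: sext_add)
lemma lext_sum_list: "lext g (sum_list (map f L)) = sum_list (map (\<lambda>a. lext g (f a)) L)"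
  by (induction L) (auto simp: lext_add)
lemma sext_sum_list: "sext g (sum_list (map f L)) = sum_list (map (\<lambda>a. sext g (f a)) L)"
  by (induction L) (auto simp: sext_add)
lemma lext_minus: "lext g (x - y) = lext g x - lext g y"
  using lext_add[of g "x - y" y] by (simp add: algebra_simps)
lemma sext_minus: "sext g (x - y) = sext g x - sext g y"
  using sext_add[of g "x - y" y] by (simp add: algebra_simps)

lemma lext_cong: "(\<And>k. k \<in> ks x \<Longrightarrow> g k = g' k) \<Longrightarrow> lext g x = lext g' x"
  by (simp add: lext_def)
lemma sext_cong: "(\<And>k. k \<in> ks x \<Longrightarrow> g k = g' k) \<Longrightarrow> sext g x = sext g' x"
  by (simp add: sext_def)

lemma lext_fun_add: "lext (\<lambda>k. g k + h k) x = lext g x + lext h x"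
  by (simp add: lext_def smult_add sum.distrib)
lemma sext_fun_add: "sext (\<lambda>k. g k + h k) x = sext g x + sext h x"
  by (simp add: sext_def algebra_simps sum.distrib)
lemma lext_fun_smult: "lext (\<lambda>k. smult c (g k)) x = smult c (lext g x)"
  by (simp add: lext_def smult_sum mult.commute)
lemma sext_fun_mult: "sext (\<lambda>k. c * g k) x = c * sext g x"
  by (simp add: sext_def sum_distrib_left algebra_simps)
lemma lext_fun_zero[simp]: "lext (\<lambda>k. 0) x = 0"
  by (simp add: lext_def)
lemma sext_fun_zero[simp]: "sext (\<lambda>k. 0) x = 0"
  by (simp add: sext_def)

lemma lext_basis_id: "lext basis x = x"
proof (rule poly_mapping_eqI)
  fix k
  have "lk (lext basis x) k = (\<Sum>j\<in>ks x. lk x j * (if j = k then 1 else 0))"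
    by (simp add: lext_def lookup_sum lookup_basis)
  also have "\<dots> = lk x k"
    by (simp add: if_distrib sum.delta in_keys_iff cong: if_cong)
  finally show "lk (lext basis x) k = lk x k" .
qed

lemma sext_basis_lookup: "sext (\<lambda>j. if j = k then 1 else 0) x = lk x k"
  by (simp add: sext_def if_distrib sum.delta in_keys_iff cong: if_cong)

definition slin :: "(('k \<Rightarrow>\<^sub>0 rat) \<Rightarrow> rat) \<Rightarrow> bool" where
  "slin L \<longleftrightarrow> (\<forall>x y. L (x + y) = L x + L y) \<and> (\<forall>c x. L (smult c x) = c * L x)"

lemma linear_map_lext: "linear_map (lext g)"
  by (simp add: linear_map_def lext_add lext_smult)
lemma slin_sext: "slin (sext g)"
  by (simp add: slin_def sext_add sext_smult)

lemma linear_map_expand: assumes "linear_map T" shows "T x = lext (\<lambda>k. T (basis k)) x"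
proof -
  have add: "T (a + b) = T a + T b" for a b using assms by (simp add: linear_map_def)
  have sm: "T (smult c a) = smult c (T a)" for c a using assms by (simp add: linear_map_def)
  have z: "T 0 = 0" using sm[of 0 0] by simp
  have s: "T (sum f A) = (\<Sum>a\<in>A. T (f a))" for f and A :: "'k set"
    by (induction A rule: infinite_finite_induct) (auto simp: z add)
  have "T x = T (lext basis x)" by (simp add: lext_basis_id)
  also have "\<dots> = lext (\<lambda>k. T (basis k)) x"
    unfolding lext_def s sm ..
  finally show ?thesis .
qed

lemma slin_expand: assumes "slin L" shows "L x = sext (\<lambda>k. L (basis k)) x"
proof -
  have add: "L (a + b) = L a + L b" for a b using assms by (simp add: slin_def)
  have sm: "L (smult c a) = c * L a" for c a using assms by (simp add: slin_def)
  have z: "L 0 = 0" using sm[of 0 0] by simp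
  have s: "L (sum f A) = (\<Sum>a\<in>A. L (f a))" for f and A :: "'k set"
    by (induction A rule: infinite_finite_induct) (auto simp: z add)
  have "L x = L (lext basis x)" by (simp add: lext_basis_id)
  also have "\<dots> = sext (\<lambda>k. L (basis k)) x"
    unfolding lext_def s sm sext_def ..
  finally show ?thesis .
qed

lemma linear_map_eqI: "linear_map T \<Longrightarrow> linear_map T' \<Longrightarrow> (\<And>k. T (basis k) = T' (basis k)) \<Longrightarrow> T x = T' x"
  by (subst linear_map_expand[of T], assumption, subst linear_map_expand[of T'], assumption, simp)

lemma slin_eqI: "slin T \<Longrightarrow> slin T' \<Longrightarrow> (\<And>k. T (basis k) = T' (basis k)) \<Longrightarrow> T x = T' x"
  by (subst slin_expand[of T], assumption, subst slin_expand[of T'], assumption, simp)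


lemma slin_lext: assumes "slin L" shows "L (lext h x) = sext (\<lambda>k. L (h k)) x"
proof -
  have add: "L (a + b) = L a + L b" for a b using assms by (simp add: slin_def)
  have sm: "L (smult c a) = c * L a" for c a using assms by (simp add: slin_def)
  have z: "L 0 = 0" using sm[of 0 0] by simp
  have s: "L (sum f A) = (\<Sum>a\<in>A. L (f a))" for f and A :: "'k set"
    by (induction A rule: infinite_finite_induct) (auto simp: z add)
  show ?thesis unfolding lext_def s sm sext_def ..
qed

lemma linear_map_lext_comp: assumes "linear_map T" shows "T (lext h x) = lext (\<lambda>k. T (h k)) x"
proof -
  have add: "T (a + b) = T a + T b" for a b using assms by (simp add: linear_map_def)
  have sm: "T (smult c a) = smult c (T a)" for c a using assms by (simp add: linear_map_def)
  have z: "T 0 = 0" using sm[of 0 0] by simp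
  have s: "T (sum f A) = (\<Sum>a\<in>A. T (f a))" for f and A :: "'k set"
    by (induction A rule: infinite_finite_induct) (auto simp: z add)
  show ?thesis unfolding lext_def s sm ..
qed

lemma sext_lext: "sext g (lext h x) = sext (\<lambda>k. sext g (h k)) x"
  by (rule slin_lext[OF slin_sext])
lemma lext_lext: "lext g (lext h x) = lext (\<lambda>k. lext g (h k)) x"
  by (rule linear_map_lext_comp[OF linear_map_lext])

lemma sext_swap: "sext (\<lambda>a. sext (\<lambda>b. h a b) y) x = sext (\<lambda>b. sext (\<lambda>a. h a b) x) y"
proof -
  have "sext (\<lambda>a. sext (\<lambda>b. h a b) y) x = (\<Sum>a\<in>ks x. \<Sum>b\<in>ks y. lk x a * (lk y b * h a b))"
    by (simp add: sext_def sum_distrib_left)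
  also have "\<dots> = (\<Sum>b\<in>ks y. \<Sum>a\<in>ks x. lk x a * (lk y b * h a b))" by (rule sum.swap)
  also have "\<dots> = sext (\<lambda>b. sext (\<lambda>a. h a b) x) y"
    by (simp add: sext_def sum_distrib_left mult.left_commute)
  finally show ?thesis .
qed
lemma lext_swap: "lext (\<lambda>a. lext (\<lambda>b. h a b) y) x = lext (\<lambda>b. lext (\<lambda>a. h a b) x) y"
proof -
  have "lext (\<lambda>a. lext (\<lambda>b. h a b) y) x = (\<Sum>a\<in>ks x. \<Sum>b\<in>ks y. smult (lk x a * lk y b) (h a b))"
    by (simp add: lext_def smult_sum)
  also have "\<dots> = (\<Sum>b\<in>ks y. \<Sum>a\<in>ks x. smult (lk x a * lk y b) (h a b))" by (rule sum.swap)
  also have "\<dots> = lext (\<lambda>b. lext (\<lambda>a. h a b) x) y"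
    by (simp add: lext_def smult_sum mult.commute)
  finally show ?thesis .
qed

lemma sext_mult_right: "sext g x * c = sext (\<lambda>k. g k * c) x"
  by (simp add: sext_def sum_distrib_right mult.assoc)
lemma sext_mult_left: "c * sext g x = sext (\<lambda>k. c * g k) x"
  by (simp add: sext_def sum_distrib_left mult.left_commute)

lemma SL_sext: "sum_list (map (\<lambda>l. sext (h l) x) L) = sext (\<lambda>k. sum_list (map (\<lambda>l. h l k) L)) x"
  by (induction L) (auto simp: sext_fun_add)
lemma SL_lext: "sum_list (map (\<lambda>l. lext (h l) x) L) = lext (\<lambda>k. sum_list (map (\<lambda>l. h l k) L)) x"
  by (induction L) (auto simp: lext_fun_add)

lemma sext_SL_single: "sext g (sum_list (map (\<lambda>c. Poly_Mapping.single c 1) L)) = sum_list (map g L)"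
  by (simp add: sext_sum_list)
lemma lext_SL_single: "lext g (sum_list (map (\<lambda>c. Poly_Mapping.single c 1) L)) = sum_list (map g L)"
  by (simp add: lext_sum_list)

lemma sum_list_mult_SL: fixes f g :: "_ \<Rightarrow> 'c::{comm_semiring_0}"
  shows "sum_list (map f L) * sum_list (map g M) = sum_list (map (\<lambda>x. sum_list (map (\<lambda>y. f x * g y) M)) L)"
  by (simp add: sum_list_const_mult sum_list_mult_const)

lemma SL_zeroI: "(\<And>x. x \<in> set L \<Longrightarrow> f x = 0) \<Longrightarrow> sum_list (map f L) = 0"
  by (induction L) auto

lemma SL_nonzero: "sum_list (map f L) \<noteq> 0 \<Longrightarrow> \<exists>x\<in>set L. f x \<noteq> 0"
  using SL_zeroI[of L f] by blast

lemma mult_lext: "mult x y = lext (\<lambda>F. lext (\<lambda>G. basis (F @ G)) y) x"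
  by (simp add: mult_def lext_def smult_sum single_as_smult)

lemma tensor_lext: "tensor x y = lext (\<lambda>F. lext (\<lambda>G. Poly_Mapping.single (F, G) 1) y) x"
  by (simp add: tensor_def lext_def smult_sum)

definition Dl :: "'d forest \<Rightarrow> 'd HH" where
  "Dl F = sum_list (map (\<lambda>c. Poly_Mapping.single c 1) (cf F))"

lemma Delta_lext: "Delta x = lext Dl x"
  by (simp add: Delta_def lext_def Dl_def)

lemma Bplus_lext: "Bplus d x = lext (\<lambda>F. basis [Node d F]) x"
  by (simp add: Bplus_def lext_def single_as_smult)

definition gb :: "'d \<Rightarrow> 'd forest \<Rightarrow> 'd H" where
  "gb d F = (if F \<noteq> [] \<and> last F = Node d [] then basis (butlast F) else 0)"

lemma gamma_lext: "gamma d x = lext (gb d) x"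
  unfolding gamma_def lext_def gb_def
  by (rule sum.cong) (auto simp: single_as_smult)

lemma conv_lext: "conv f g x = lext (\<lambda>pr. mult (f (basis (fst pr))) (g (basis (snd pr)))) (Delta x)"
  by (simp add: conv_def lext_def)

lemma pair2_sext: "pair2 B x1 x2 T = sext (\<lambda>pr. B x1 (basis (fst pr)) * B x2 (basis (snd pr))) T"
  by (simp add: pair2_def sext_def mult.assoc)

lemma lincomb_lext: "lincomb c e = lext e c"
  by (simp add: lincomb_def lext_def)

lemma eps_basis[simp]: "eps (basis F) = (if F = [] then 1 else 0)"
  by (simp add: eps_def lookup_basis)
lemma eps_add: "eps (x + y) = eps x + eps y" by (simp add: eps_def lookup_add)
lemma eps_smult: "eps (smult c x) = c * eps x" by (simp add: eps_def)
lemma eps_sext: "eps x = sext (\<lambda>F. if F = [] then 1 else 0) x"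
  by (simp add: eps_def sext_basis_lookup)

lemma mult_basis[simp]: "mult (basis F) (basis G) = basis (F @ G)"
  by (simp add: mult_lext)
lemma mult_add_left: "mult (x + y) z = mult x z + mult y z"
  by (simp add: mult_lext lext_add)
lemma mult_add_right: "mult z (x + y) = mult z x + mult z y"
  by (simp add: mult_lext lext_add lext_fun_add)
lemma mult_smult_left: "mult (smult c x) z = smult c (mult x z)"
  by (simp add: mult_lext lext_smult)
lemma mult_smult_right: "mult z (smult c x) = smult c (mult z x)"
  by (simp add: mult_lext lext_smult lext_fun_smult)
lemma mult_zero_left[simp]: "mult 0 x = 0" by (simp add: mult_lext)
lemma mult_zero_right[simp]: "mult x 0 = 0" by (simp add: mult_lext)

lemma mult_lext_left: "mult (lext h x) y = lext (\<lambda>k. mult (h k) y) x"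
  by (rule linear_map_lext_comp) (simp add: linear_map_def mult_add_left mult_smult_left)
lemma mult_lext_right: "mult y (lext h x) = lext (\<lambda>k. mult y (h k)) x"
  by (rule linear_map_lext_comp) (simp add: linear_map_def mult_add_right mult_smult_right)

lemma mult_one_left[simp]: "mult one x = x"
  by (simp add: one_def mult_lext lext_basis_id)
lemma mult_one_right[simp]: "mult x one = x"
  by (simp add: one_def mult_lext lext_basis_id)

lemma mult_basis_left: "mult (basis F) y = lext (\<lambda>G. basis (F @ G)) y"
  by (simp add: mult_lext)
lemma mult_basis_right: "mult x (basis G) = lext (\<lambda>F. basis (F @ G)) x"
  by (simp add: mult_lext)

lemma mult_expand_left: "mult x y = lext (\<lambda>F. mult (basis F) y) x"
proof -
  have "mult x y = mult (lext basis x) y" by (simp only: lext_basis_id)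
  also have "\<dots> = lext (\<lambda>F. mult (basis F) y) x" by (rule mult_lext_left)
  finally show ?thesis .
qed

lemma mult_assoc: "mult (mult x y) z = mult x (mult y z)"
proof -
  have "mult (mult x y) z = lext (\<lambda>F. lext (\<lambda>G. mult (basis (F @ G)) z) y) x"
    by (simp only: mult_lext[of x y] mult_lext_left)
  also have "\<dots> = lext (\<lambda>F. lext (\<lambda>G. lext (\<lambda>K. basis (F @ G @ K)) z) y) x"
    by (simp only: mult_basis_left append_assoc)
  also have "\<dots> = lext (\<lambda>F. mult (basis F) (lext (\<lambda>G. lext (\<lambda>K. basis (G @ K)) z) y)) x"
    by (simp only: mult_basis_left lext_lext lext_basis append_assoc)
  also have "\<dots> = lext (\<lambda>F. mult (basis F) (mult y z)) x"
    by (simp only: mult_lext[of y z])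
  also have "\<dots> = mult x (mult y z)"
    by (rule mult_expand_left[symmetric])
  finally show ?thesis .
qed

lemma mult_sum_list_left: "mult (sum_list (map f L)) y = sum_list (map (\<lambda>l. mult (f l) y) L)"
  by (induction L) (auto simp: mult_add_left)
lemma mult_sum_list_right: "mult y (sum_list (map f L)) = sum_list (map (\<lambda>l. mult y (f l)) L)"
  by (induction L) (auto simp: mult_add_right)

lemma tensor_add_left: "tensor (x + y) z = tensor x z + tensor y z"
  by (simp add: tensor_lext lext_add)
lemma tensor_add_right: "tensor z (x + y) = tensor z x + tensor z y"
  by (simp add: tensor_lext lext_add lext_fun_add)
lemma tensor_smult_left: "tensor (smult c x) z = smult c (tensor x z)"
  by (simp add: tensor_lext lext_smult)
lemma tensor_smult_right: "tensor z (smult c x) = smult c (tensor z x)"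
  by (simp add: tensor_lext lext_smult lext_fun_smult)
lemma tensor_basis[simp]: "tensor (basis F) (basis G) = Poly_Mapping.single (F, G) 1"
  by (simp add: tensor_lext)

lemma Delta_basis: "Delta (basis F) = Dl F" by (simp add: Delta_lext)
lemma Delta_add: "Delta (x + y) = Delta x + Delta y" by (simp add: Delta_lext lext_add)
lemma Delta_smult: "Delta (smult c x) = smult c (Delta x)" by (simp add: Delta_lext lext_smult)

lemma Bplus_basis: "Bplus d (basis F) = basis [Node d F]" by (simp add: Bplus_lext)
lemma gamma_basis: "gamma d (basis F) = gb d F" by (simp add: gamma_lext)

lemma bilinear_expand: assumes "bilinear_form B"
  shows "B x y = sext (\<lambda>F. sext (\<lambda>G. B (basis F) (basis G)) y) x"
proof -
  have s1: "slin (\<lambda>x. B x y)" for y using assms by (simp add: bilinear_form_def slin_def)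
  have s2: "slin (B x)" for x using assms by (simp add: bilinear_form_def slin_def)
  have "B x y = sext (\<lambda>F. B (basis F) y) x" using slin_expand[OF s1[of y], of x] by simp
  also have "\<dots> = sext (\<lambda>F. sext (\<lambda>G. B (basis F) (basis G)) y) x"
    by (rule sext_cong) (rule slin_expand[OF s2])
  finally show ?thesis .
qed

lemma bilinear_zero: assumes "bilinear_form B" shows "B x 0 = 0" "B 0 x = 0"
proof -
  have "B x (smult 0 0) = 0 * B x 0" "B (smult 0 0) x = 0 * B 0 x"
    using assms unfolding bilinear_form_def by blast+
  then show "B x 0 = 0" "B 0 x = 0" by simp_all
qed


lemma SL4: fixes f :: "_ \<Rightarrow> _ \<Rightarrow> _ \<Rightarrow> _ \<Rightarrow> 'c::comm_monoid_add"
  shows "sum_list (map (\<lambda>a. sum_list (map (\<lambda>b. sum_list (map (\<lambda>c. sum_list (map (\<lambda>d. f a b c d) D)) C)) B)) A)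
       = sum_list (map (\<lambda>c. sum_list (map (\<lambda>d. sum_list (map (\<lambda>a. sum_list (map (\<lambda>b. f a b c d) B)) A)) D)) C)"
proof -
  have 1: "sum_list (map (\<lambda>b. sum_list (map (\<lambda>c. sum_list (map (\<lambda>d. f a b c d) D)) C)) B)
         = sum_list (map (\<lambda>c. sum_list (map (\<lambda>b. sum_list (map (\<lambda>d. f a b c d) D)) B)) C)" for a
    by (rule SL_swap)
  have 2: "sum_list (map (\<lambda>a. sum_list (map (\<lambda>c. sum_list (map (\<lambda>b. sum_list (map (\<lambda>d. f a b c d) D)) B)) C)) A)
         = sum_list (map (\<lambda>c. sum_list (map (\<lambda>a. sum_list (map (\<lambda>b. sum_list (map (\<lambda>d. f a b c d) D)) B)) A)) C)"
    by (rule SL_swap)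
  have 3: "sum_list (map (\<lambda>b. sum_list (map (\<lambda>d. f a b c d) D)) B)
         = sum_list (map (\<lambda>d. sum_list (map (\<lambda>b. f a b c d) B)) D)" for a c
    by (rule SL_swap)
  have 4: "sum_list (map (\<lambda>a. sum_list (map (\<lambda>d. sum_list (map (\<lambda>b. f a b c d) B)) D)) A)
         = sum_list (map (\<lambda>d. sum_list (map (\<lambda>a. sum_list (map (\<lambda>b. f a b c d) B)) A)) D)" for c
    by (rule SL_swap)
  show ?thesis
    apply (simp only: 1)
    apply (simp only: 2)
    apply (simp only: 3)
    apply (simp only: 4)
    done
qed

function Bb :: "'d forest \<Rightarrow> 'd forest \<Rightarrow> rat" where
  "Bb [] G = (if G = [] then 1 else 0)"
| "Bb [Node d F] G = (if G \<noteq> [] \<and> last G = Node d [] then Bb F (butlast G) else 0)"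
| "Bb (t # t' # ts) G = sum_list (map (\<lambda>(p, r). Bb [t] p * Bb (t' # ts) r) (cf G))"
  by pat_completeness auto
termination by (relation "measure (\<lambda>(F, G). weight F)") (auto simp: weight_t_pos)

lemma Bb_Cons2: "G' \<noteq> [] \<Longrightarrow> Bb (t # G') G = sum_list (map (\<lambda>(p, r). Bb [t] p * Bb G' r) (cf G))"
  by (cases G') auto

declare Bb.simps(3)[simp del]
declare Bb.simps(1)[simp del]
lemma Bb_Nil_Nil[simp]: "Bb [] [] = 1" by (simp add: Bb.simps(1))
lemma Bb_Nil_Cons[simp]: "Bb [] (t # G) = 0" by (simp add: Bb.simps(1))

lemma SL_Bb_Nil_left: "sum_list (map (\<lambda>(p, r). Bb [] p * h r) (cf G)) = h G"
proof -
  have eq: "(\<lambda>(p, r). Bb [] p * h r) = (\<lambda>(p, r). if p = [] then h r else 0)" by (auto simp: Bb.simps(1))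
  show ?thesis unfolding eq by (rule cf_counitL)
qed

lemma SL_Bb_Nil_right: "sum_list (map (\<lambda>(p, r). h p * Bb [] r) (cf G)) = h G"
proof -
  have eq: "(\<lambda>(p, r). h p * Bb [] r) = (\<lambda>(p, r). if r = [] then h p else 0)" by (auto simp: Bb.simps(1))
  show ?thesis unfolding eq by (rule cf_counitR)
qed

lemma Bb_weight: "Bb F G \<noteq> 0 \<Longrightarrow> weight F = weight G"
proof (induction F G rule: Bb.induct)
  case (1 G) then show ?case by (auto simp: Bb.simps(1) split: if_splits)
next
  case (2 d F G)
  then have G: "G \<noteq> []" "last G = Node d []" and "Bb F (butlast G) \<noteq> 0" by (auto split: if_splits)
  then have "weight F = weight (butlast G)" using 2 by auto
  moreover have "weight G = weight (butlast G) + weight [last G]"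
    using G append_butlast_last_id[of G] weight_append by metis
  ultimately show ?case using G by simp
next
  case (3 t t' ts G)
  obtain p r where pr: "(p, r) \<in> set (cf G)" "Bb [t] p * Bb (t' # ts) r \<noteq> 0"
    using SL_nonzero[of "\<lambda>(p, r). Bb [t] p * Bb (t' # ts) r" "cf G"] 3(3) by (auto simp: Bb.simps(3))
  then have "weight [t] = weight p" "weight (t' # ts) = weight r" using 3(1,2) by auto
  then show ?case using cf_weight[OF pr(1)] by simp
qed

lemma Bb_append: "Bb (F1 @ F2) G = sum_list (map (\<lambda>(p, r). Bb F1 p * Bb F2 r) (cf G))"
proof (induction F1 arbitrary: G)
  case Nil then show ?case by (simp add: SL_Bb_Nil_left)
next
  case (Cons t F1)
  show ?case
  proof (cases F1)
    case Nil
    then show ?thesis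
      by (cases "F2 = []") (simp_all add: SL_Bb_Nil_right Bb_Cons2)
  next
    case (Cons t1 rest)
    have "Bb ((t # F1) @ F2) G = sum_list (map (\<lambda>(p, r). Bb [t] p * Bb (F1 @ F2) r) (cf G))"
      using Cons by (simp add: Bb.simps(3))
    also have "\<dots> = sum_list (map (\<lambda>(p, r). sum_list (map (\<lambda>(a, b). Bb [t] p * Bb F1 a * Bb F2 b) (cf r))) (cf G))"
      by (simp add: Cons.IH split_def sum_list_const_mult[symmetric] mult.assoc)
    also have "\<dots> = sum_list (map (\<lambda>(p, r). sum_list (map (\<lambda>(a, b). Bb [t] a * Bb F1 b * Bb F2 r) (cf p))) (cf G))"
      by (rule cf_coassoc[symmetric, where f="\<lambda>x y z. Bb [t] x * Bb F1 y * Bb F2 z"])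
    also have "\<dots> = sum_list (map (\<lambda>(p, r). Bb (t # F1) p * Bb F2 r) (cf G))"
      using Cons by (simp add: Bb.simps(3) split_def sum_list_mult_const)
    finally show ?thesis .
  qed
qed

lemma Bb_Nil_right: "Bb F [] = (if F = [] then 1 else 0)"
  by (induction F rule: forest_induct) (auto simp: Bb_Cons2 Bb.simps(1))

lemma Bb_leaf_Nil[simp]: "Bb [Node d F] [] = 0" by simp

lemma Bb_append_right: "Bb G (F1 @ F2) = sum_list (map (\<lambda>(p, r). Bb p F1 * Bb r F2) (cf G))"
proof (induction G arbitrary: F1 F2 rule: forest_induct)
  case Nil then show ?case by (simp add: Bb.simps(1))
next
  case (Node d H)
  have rhs: "sum_list (map (\<lambda>(p, r). Bb p F1 * Bb r F2) (cf [Node d H]))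
     = Bb [Node d H] F1 * Bb [] F2 + sum_list (map (\<lambda>(p, r). Bb p F1 * Bb [Node d r] F2) (cf H))"
    by (simp add: cuts_Node split_def comp_def)
  show ?case
  proof (cases "F2 = []")
    case True then show ?thesis unfolding rhs by (simp add: split_def)
  next
    case False
    then have l: "last (F1 @ F2) = last F2" "butlast (F1 @ F2) = F1 @ butlast F2"
      by (simp_all add: butlast_append)
    have b0: "Bb [] F2 = 0" using False by (cases F2) auto
    show ?thesis
    proof (cases "last F2 = Node d []")
      case True
      then show ?thesis unfolding rhs using False l b0 Node[of F1 "butlast F2"] by simp
    next
      case False2: False
      then show ?thesis unfolding rhs using False l b0 by (simp add: split_def)
    qed
  qed
next
  case (Cons t G')
  let ?S = "\<lambda>L h. sum_list (map h L)"
  have "Bb (t # G') (F1 @ F2) = ?S (cf F1) (\<lambda>(p1,r1). ?S (cf F2) (\<lambda>(p2,r2). Bb [t] (p1 @ p2) * Bb G' (r1 @ r2)))"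
    using Cons.hyps by (simp add: Bb_Cons2 cf_append)
  also have "\<dots> = ?S (cf F1) (\<lambda>(p1,r1). ?S (cf F2) (\<lambda>(p2,r2). ?S (cf [t]) (\<lambda>(a,b). ?S (cf G') (\<lambda>(c,e). Bb a p1 * Bb b p2 * (Bb c r1 * Bb e r2)))))"
    by (simp add: Cons.IH split_def sum_list_mult_SL mult.assoc)
  also have "\<dots> = ?S (cf [t]) (\<lambda>(a,b). ?S (cf G') (\<lambda>(c,e). ?S (cf F1) (\<lambda>(p1,r1). ?S (cf F2) (\<lambda>(p2,r2). Bb a p1 * Bb b p2 * (Bb c r1 * Bb e r2)))))"
    unfolding split_def by (rule SL4)
  also have "\<dots> = ?S (cf [t]) (\<lambda>(a,b). ?S (cf G') (\<lambda>(c,e). Bb (a @ c) F1 * Bb (b @ e) F2))"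
    by (simp add: Bb_append split_def sum_list_mult_SL mult.assoc mult.left_commute)
  also have "\<dots> = ?S (cf (t # G')) (\<lambda>(p, r). Bb p F1 * Bb r F2)"
    by (subst cf_Cons', subst cf_append) (simp add: split_def)
  finally show ?case .
qed

lemma Bb_gamma_right: "Bb G [Node d F] = (if G \<noteq> [] \<and> last G = Node d [] then Bb (butlast G) F else 0)"
proof (induction G arbitrary: F rule: forest_induct)
  case Nil then show ?case by simp
next
  case (Node e H) then show ?case by (auto simp: Bb_Nil_right Bb.simps(1))
next
  case (Cons t G')
  have "Bb (t # G') [Node d F] = sum_list (map (\<lambda>(p, r). Bb [t] p * Bb G' [Node d r]) (cf F))"
    using Cons.hyps by (simp add: Bb_Cons2 cuts_Node split_def comp_def Bb_Nil_right)
  also have "\<dots> = (if last G' = Node d [] then sum_list (map (\<lambda>(p, r). Bb [t] p * Bb (butlast G') r) (cf F)) else 0)"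
    using Cons.hyps by (simp add: Cons.IH split_def)
  also have "\<dots> = (if t # G' \<noteq> [] \<and> last (t # G') = Node d [] then Bb (butlast (t # G')) F else 0)"
  proof (cases "butlast G' = []")
    case True then show ?thesis using Cons.hyps by (simp add: SL_Bb_Nil_right)
  next
    case False then show ?thesis using Cons.hyps by (simp add: Bb_Cons2)
  qed
  finally show ?case .
qed

lemma Bb_sym: "Bb F G = Bb G F"
proof (induction F arbitrary: G rule: forest_induct)
  case Nil then show ?case by (simp add: Bb_Nil_right Bb.simps(1))
next
  case (Node d H) then show ?case by (simp add: Bb_gamma_right)
next
  case (Cons t F')
  have "Bb (t # F') G = sum_list (map (\<lambda>(p, r). Bb p [t] * Bb r F') (cf G))"
    using Cons by (simp add: Bb_Cons2 split_def)
  also have "\<dots> = Bb G ([t] @ F')" by (simp only: Bb_append_right)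
  finally show ?case by simp
qed


definition Bf :: "'d H \<Rightarrow> 'd H \<Rightarrow> rat" where
  "Bf x y = sext (\<lambda>F. sext (\<lambda>G. Bb F G) y) x"

lemma Bf_bilinear: "bilinear_form Bf"
  by (simp add: bilinear_form_def Bf_def sext_add sext_smult sext_fun_add sext_fun_mult)

lemma slin_Bf_left: "slin (\<lambda>x. Bf x y)"
  using Bf_bilinear unfolding bilinear_form_def slin_def by blast
lemma slin_Bf_right: "slin (Bf x)"
  using Bf_bilinear unfolding bilinear_form_def slin_def by blast

lemma Bf_basis[simp]: "Bf (basis F) (basis G) = Bb F G"
  by (simp add: Bf_def)
lemma Bf_basis_left: "Bf (basis F) y = sext (Bb F) y"
  by (simp add: Bf_def)
lemma Bf_basis_right: "Bf x (basis G) = sext (\<lambda>F. Bb F G) x"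
  by (simp add: Bf_def)

lemma Bf_lext_left: "Bf (lext h x) y = sext (\<lambda>k. Bf (h k) y) x"
  by (rule slin_lext[OF slin_Bf_left])
lemma Bf_lext_right: "Bf y (lext h x) = sext (\<lambda>k. Bf y (h k)) x"
  by (rule slin_lext[OF slin_Bf_right])

lemma Bf_ax1: "Bf one x = eps x"
proof -
  have eq: "Bb [] = (\<lambda>G. if G = [] then 1 else 0)" by (auto simp: Bb.simps(1))
  show ?thesis by (simp only: one_def Bf_basis_left eq eps_sext)
qed

lemma Bf_prod_basis: "Bf x1 (basis p) * Bf x2 (basis r) = sext (\<lambda>F1. sext (\<lambda>F2. Bb F1 p * Bb F2 r) x2) x1"
proof -
  have "Bf x1 (basis p) * Bf x2 (basis r) = sext (\<lambda>F1. Bb F1 p * Bf x2 (basis r)) x1"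
    by (simp only: Bf_basis_right[of x1 p] sext_mult_right)
  also have "\<dots> = sext (\<lambda>F1. sext (\<lambda>F2. Bb F1 p * Bb F2 r) x2) x1"
    by (simp only: Bf_basis_right[of x2 r] sext_mult_left)
  finally show ?thesis .
qed

lemma Bf_ax2: "Bf (mult x1 x2) y = pair2 Bf x1 x2 (Delta y)"
proof -
  have "Bf (mult x1 x2) y = sext (\<lambda>F1. sext (\<lambda>F2. sext (\<lambda>G. Bb (F1 @ F2) G) y) x2) x1"
    by (simp add: mult_lext Bf_lext_left Bf_basis_left)
  also have "\<dots> = sext (\<lambda>G. sext (\<lambda>F1. sext (\<lambda>F2. Bb (F1 @ F2) G) x2) x1) y"
  proof -
    have 1: "sext (\<lambda>F2. sext (\<lambda>G. Bb (F1 @ F2) G) y) x2 = sext (\<lambda>G. sext (\<lambda>F2. Bb (F1 @ F2) G) x2) y" for F1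
      by (rule sext_swap)
    show ?thesis by (simp only: 1) (rule sext_swap)
  qed
  also have "\<dots> = sext (\<lambda>G. sum_list (map (\<lambda>pr. Bf x1 (basis (fst pr)) * Bf x2 (basis (snd pr))) (cf G))) y"
    by (simp only: Bf_prod_basis SL_sext Bb_append split_def)
  also have "\<dots> = pair2 Bf x1 x2 (Delta y)"
    by (simp add: pair2_sext Delta_lext sext_lext Dl_def sext_SL_single)
  finally show ?thesis .
qed

lemma sext_gb: "sext g (gb d G) = (if G \<noteq> [] \<and> last G = Node d [] then g (butlast G) else 0)"
  by (simp add: gb_def)

lemma Bf_ax3: "Bf (Bplus d x) y = Bf x (gamma d y)"
  apply (simp add: Bplus_lext gamma_lext Bf_lext_left Bf_basis_left Bf_def sext_lext sext_gb)
  apply (intro sext_cong)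
  apply simp
  done

lemma Bf_form_axioms: "form_axioms Bf"
  by (simp add: form_axioms_def Bf_bilinear Bf_ax1 Bf_ax2 Bf_ax3)

lemma basis_Bplus: "basis [Node d F] = Bplus d (basis F)"
  by (simp add: Bplus_basis)

lemma basis_Cons_mult: "basis (t # G) = mult (basis [t]) (basis G)"
  by simp

lemma form_unique_basis:
  assumes "form_axioms B" shows "B (basis F) (basis G) = Bb F G"
proof -
  have bl: "bilinear_form B" and ax1: "\<And>x. B one x = eps x"
    and ax2: "\<And>x1 x2 y. B (mult x1 x2) y = pair2 B x1 x2 (Delta y)"
    and ax3: "\<And>d x y. B (Bplus d x) y = B x (gamma d y)"
    using assms unfolding form_axioms_def by blast+
  show ?thesis
  proof (induction F arbitrary: G rule: forest_induct)
    case Nil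
    have "B one (basis G) = eps (basis G)" by (rule ax1)
    then show ?case by (simp add: one_def Bb.simps(1))
  next
    case (Node d ts)
    have "B (basis [Node d ts]) (basis G) = B (basis ts) (gamma d (basis G))"
      by (simp only: basis_Bplus ax3)
    also have "\<dots> = Bb [Node d ts] G"
      by (simp add: gamma_basis gb_def Node bilinear_zero[OF bl])
    finally show ?case .
  next
    case (Cons t G')
    have "basis (t # G') = mult (basis [t]) (basis G')" by simp
    then have "B (basis (t # G')) (basis G) = pair2 B (basis [t]) (basis G') (Delta (basis G))"
      by (simp only: ax2)
    also have "\<dots> = Bb (t # G') G"
      using Cons by (simp add: pair2_sext Delta_basis Dl_def sext_SL_single Bb_Cons2 split_def)
    finally show ?case .
  qed
qed

lemma form_unique: assumes "form_axioms B" shows "B = Bf"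
proof (intro ext)
  fix x y
  have bl: "bilinear_form B" using assms by (simp add: form_axioms_def)
  show "B x y = Bf x y"
    by (subst bilinear_expand[OF bl], subst bilinear_expand[OF Bf_bilinear])
       (simp add: form_unique_basis[OF assms])
qed

lemma Bf_sym: "Bf x y = Bf y x"
  unfolding Bf_def by (rule trans[OF sext_swap], intro sext_cong, rule Bb_sym)

lemma Bf_homog: assumes "homogeneous n x" "homogeneous m y" "n \<noteq> m" shows "Bf x y = 0"
proof -
  have "Bb F G = 0" if "F \<in> ks x" "G \<in> ks y" for F G
    using assms that Bb_weight[of F G] by (auto simp: homogeneous_def)
  then show ?thesis by (simp add: Bf_def sext_def)
qed


lemma weight_butlast_less: "F \<noteq> [] \<Longrightarrow> weight (butlast F) < weight F"
  using append_butlast_last_id[of F] weight_append[of "butlast F" "[last F]"] weight_t_pos[of "last F"]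
  by simp

lemma weight_last_children_less: "F \<noteq> [] \<Longrightarrow> last F = Node d G \<Longrightarrow> weight G < weight F"
  using append_butlast_last_id[of F] weight_append[of "butlast F" "[last F]"]
  by (metis add.right_neutral add_Suc_right le_add2 le_imp_less_Suc weight_Cons weight_Nil weight_t_Node)

lemma forest_snoc_induct[case_names Nil Snoc]:
  assumes "P []" "\<And>F d G. P F \<Longrightarrow> P G \<Longrightarrow> P (F @ [Node d G])"
  shows "P F"
proof (induction F rule: measure_induct_rule[of weight])
  case (less F)
  show ?case
  proof (cases "F = []")
    case True then show ?thesis using assms(1) by simp
  next
    case False
    obtain d G where l: "last F = Node d G" by (cases "last F")
    have F: "F = butlast F @ [Node d G]" using False l append_butlast_last_id[of F] by simp
    have "P (butlast F)" using less weight_butlast_less[OF False] by simp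
    moreover have "P G" using less weight_last_children_less[OF False l] by simp
    ultimately show ?thesis using assms(2) F by metis
  qed
qed

function theta :: "'d forest \<Rightarrow> 'd forest" where
  "theta F = (if F = [] then [] else (case last F of Node d G \<Rightarrow> theta G @ [Node d (theta (butlast F))]))"
  by pat_completeness auto
termination
  by (relation "measure weight") (auto simp: weight_butlast_less weight_last_children_less)

declare theta.simps[simp del]

lemma theta_Nil[simp]: "theta [] = []"
  by (simp add: theta.simps)

lemma theta_snoc[simp]: "theta (F @ [Node d G]) = theta G @ [Node d (theta F)]"
  by (subst theta.simps) simp

lemma weight_theta[simp]: "weight (theta F) = weight F"
  by (induction F rule: forest_snoc_induct) auto

lemma theta_theta[simp]: "theta (theta F) = F"
  by (induction F rule: forest_snoc_induct) auto

lemma theta_eq_Nil[simp]: "theta F = [] \<longleftrightarrow> F = []"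
  using weight_theta[of F] weight_eq_0 by metis

fun rootd :: "'d ptree \<Rightarrow> 'd" where "rootd (Node d _) = d"
fun kids :: "'d ptree \<Rightarrow> 'd forest" where "kids (Node _ ts) = ts"

function lef :: "'d forest \<Rightarrow> 'd forest \<Rightarrow> bool" where
  "lef K M = (if K = [] \<or> M = [] then K = M else
     weight_t (last K) < weight_t (last M) \<or>
     (weight_t (last K) = weight_t (last M) \<and> rootd (last K) = rootd (last M) \<and>
      lef (butlast K) (butlast M) \<and> lef (kids (last K)) (kids (last M))))"
  by pat_completeness auto
termination
  apply (relation "measure (\<lambda>(K, M). weight K)")
   apply (auto simp: weight_butlast_less)
  by (metis kids.simps ptree.exhaust weight_last_children_less)

declare lef.simps[simp del]

lemma lef_Nil1[simp]: "lef [] M = (M = [])" by (auto simp: lef.simps)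
lemma lef_Nil2[simp]: "lef K [] = (K = [])" by (simp add: lef.simps)
lemma lef_snoc[simp]: "lef (K @ [Node a H]) (M @ [Node b H']) =
  (weight H < weight H' \<or> (weight H = weight H' \<and> a = b \<and> lef K M \<and> lef H H'))"
  by (subst lef.simps) simp

lemma snoc_cases: obtains "F = []" | F' d G where "F = F' @ [Node d G]"
proof (cases "F = []")
  case False
  obtain d G where "last F = Node d G" by (cases "last F")
  then have "F = butlast F @ [Node d G]" using False append_butlast_last_id[of F] by simp
  then show ?thesis using that by blast
qed simp

lemma lef_trans: "lef A B \<Longrightarrow> lef B C \<Longrightarrow> lef A C"
proof (induction A arbitrary: B C rule: forest_snoc_induct)
  case Nil then show ?case by simp
next
  case (Snoc A' a H)
  obtain B' b H2 where B: "B = B' @ [Node b H2]"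
    using Snoc.prems(1) by (cases B rule: snoc_cases) auto
  obtain C' c H3 where C: "C = C' @ [Node c H3]"
    using Snoc.prems(2) B by (cases C rule: snoc_cases) auto
  show ?case using Snoc.prems Snoc.IH B C by auto
qed

lemma lef_antisym: "lef A B \<Longrightarrow> lef B A \<Longrightarrow> A = B"
proof (induction A arbitrary: B rule: forest_snoc_induct)
  case Nil then show ?case by simp
next
  case (Snoc A' a H)
  obtain B' b H2 where B: "B = B' @ [Node b H2]"
    using Snoc.prems(1) by (cases B rule: snoc_cases) auto
  show ?case using Snoc.prems Snoc.IH B by auto
qed

lemma cf_Nil_left_mem: "(p, r) \<in> set (cf F) \<Longrightarrow> p = [] \<Longrightarrow> r = F"
proof (induction F arbitrary: p r rule: forest_induct)
  case Nil then show ?case by simp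
next
  case (Node d ts) then show ?case by (auto simp: cuts_Node)
next
  case (Cons t G)
  from Cons.prems obtain p1 r1 p2 r2 where "(p1, r1) \<in> set (cuts t)" "(p2, r2) \<in> set (cf G)" "p = p1 @ p2" "r = r1 @ r2"
    by (auto simp: cf_Cons pc_def)
  then show ?case using Cons.IH(1)[of p1 r1] Cons.IH(2)[of p2 r2] Cons.prems by simp
qed

lemma Bb_leaf_snoc: "Bb [Node d G0] (r1 @ [Node e rr]) = (if e = d \<and> rr = [] then Bb G0 r1 else 0)"
  by auto

lemma Bb_snoc_snoc: "Bb (F' @ [Node d G0]) (K0 @ [Node e H]) =
   sum_list (map (\<lambda>(p1, r1). Bb F' (p1 @ [Node e H]) * Bb [Node d G0] r1) (cf K0)) +
   (if e = d then sum_list (map (\<lambda>(p1, r1). Bb F' (p1 @ H) * Bb G0 r1) (cf K0)) else 0)"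
proof -
  have inner: "sum_list (map (\<lambda>(pp, rr). Bb F' (p1 @ pp) * Bb [Node d G0] (r1 @ [Node e rr])) (cf H))
      = (if e = d then Bb F' (p1 @ H) * Bb G0 r1 else 0)" for p1 r1
  proof -
    have "(\<lambda>(pp, rr). Bb F' (p1 @ pp) * Bb [Node d G0] (r1 @ [Node e rr]))
        = (\<lambda>(pp, rr). if rr = [] then (if e = d then Bb F' (p1 @ pp) * Bb G0 r1 else 0) else 0)"
      by (auto simp: Bb_leaf_snoc)
    then show ?thesis by (simp only: cf_counitR[where g="\<lambda>pp. if e = d then Bb F' (p1 @ pp) * Bb G0 r1 else 0"])
  qed
  have "Bb (F' @ [Node d G0]) (K0 @ [Node e H]) =
      sum_list (map (\<lambda>(p1, r1). sum_list (map (\<lambda>(p2, r2). Bb F' (p1 @ p2) * Bb [Node d G0] (r1 @ r2)) (cuts (Node e H)))) (cf K0))"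
    by (simp only: Bb_append cf_append cf_single prod.case)
  also have "\<dots> = sum_list (map (\<lambda>(p1, r1). Bb F' (p1 @ [Node e H]) * Bb [Node d G0] r1 +
       sum_list (map (\<lambda>(pp, rr). Bb F' (p1 @ pp) * Bb [Node d G0] (r1 @ [Node e rr])) (cf H))) (cf K0))"
    by (simp add: cuts_Node split_def comp_def del: Bb.simps(2))
  also have "\<dots> = sum_list (map (\<lambda>(p1, r1). Bb F' (p1 @ [Node e H]) * Bb [Node d G0] r1 +
       (if e = d then Bb F' (p1 @ H) * Bb G0 r1 else 0)) (cf K0))"
    by (simp only: inner)
  also have "\<dots> = sum_list (map (\<lambda>(p1, r1). Bb F' (p1 @ [Node e H]) * Bb [Node d G0] r1) (cf K0)) +
   (if e = d then sum_list (map (\<lambda>(p1, r1). Bb F' (p1 @ H) * Bb G0 r1) (cf K0)) else 0)"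
    by (cases "e = d") (simp_all add: split_def sum_list_addf)
  finally show ?thesis .
qed

lemma tri1: "Bb F K \<noteq> 0 \<Longrightarrow> lef K (theta F)"
proof (induction F arbitrary: K rule: forest_snoc_induct)
  case Nil then show ?case by (cases K) auto
next
  case (Snoc F' d G0)
  have "K \<noteq> []" using Snoc.prems by (auto simp: Bb_Nil_right)
  then obtain K0 e H where K: "K = K0 @ [Node e H]" by (cases K rule: snoc_cases) auto
  let ?s1 = "sum_list (map (\<lambda>(p1, r1). Bb F' (p1 @ [Node e H]) * Bb [Node d G0] r1) (cf K0))"
  let ?s2 = "sum_list (map (\<lambda>(p1, r1). Bb F' (p1 @ H) * Bb G0 r1) (cf K0))"
  have "?s1 + (if e = d then ?s2 else 0) \<noteq> 0" using Snoc.prems K Bb_snoc_snoc by metis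
  then have "?s1 \<noteq> 0 \<or> (e = d \<and> ?s2 \<noteq> 0)" by (cases "e = d") auto
  then show ?case
  proof
    assume "?s1 \<noteq> 0"
    then obtain p1 r1 where "(p1, r1) \<in> set (cf K0)" "Bb F' (p1 @ [Node e H]) \<noteq> 0"
      using SL_nonzero by fastforce
    then have "weight F' = weight p1 + Suc (weight H)" using Bb_weight by fastforce
    then show ?thesis using K by simp
  next
    assume a: "e = d \<and> ?s2 \<noteq> 0"
    then obtain p1 r1 where pr: "(p1, r1) \<in> set (cf K0)" "Bb F' (p1 @ H) \<noteq> 0" "Bb G0 r1 \<noteq> 0"
      using SL_nonzero by fastforce
    then have w: "weight F' = weight p1 + weight H" using Bb_weight by fastforce
    show ?thesis
    proof (cases "p1 = []")
      case True
      then have "r1 = K0" using cf_Nil_left_mem pr(1) by blast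
      then show ?thesis using K a w True pr Snoc.IH by simp
    next
      case False
      then have "weight H < weight F'" using w by (simp add: zero_less_iff_neq_zero)
      then show ?thesis using K by simp
    qed
  qed
qed

lemma tri2: "Bb F (theta F) = 1"
proof (induction F rule: forest_snoc_induct)
  case Nil then show ?case by simp
next
  case (Snoc F' d G0)
  have s1: "sum_list (map (\<lambda>(p1, r1). Bb F' (p1 @ [Node d (theta F')]) * Bb [Node d G0] r1) (cf (theta G0))) = 0"
  proof (rule SL_zeroI)
    fix x assume "x \<in> set (cf (theta G0))"
    have "Bb F' (fst x @ [Node d (theta F')]) = 0"
      using Bb_weight[of F' "fst x @ [Node d (theta F')]"] by auto
    then show "(case x of (p1, r1) \<Rightarrow> Bb F' (p1 @ [Node d (theta F')]) * Bb [Node d G0] r1) = 0"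
      by (simp add: split_def)
  qed
  have s2: "sum_list (map (\<lambda>(p1, r1). Bb F' (p1 @ theta F') * Bb G0 r1) (cf (theta G0)))
    = sum_list (map (\<lambda>(p1, r1). if p1 = [] then Bb F' (theta F') * Bb G0 r1 else 0) (cf (theta G0)))"
  proof (rule arg_cong[where f=sum_list], rule map_cong, simp)
    fix x assume "x \<in> set (cf (theta G0))"
    show "(case x of (p1, r1) \<Rightarrow> Bb F' (p1 @ theta F') * Bb G0 r1) = (case x of (p1, r1) \<Rightarrow> if p1 = [] then Bb F' (theta F') * Bb G0 r1 else 0)"
      using Bb_weight[of F' "fst x @ theta F'"] by (cases x) (auto simp: zero_less_iff_neq_zero)
  qed
  have "Bb (F' @ [Node d G0]) (theta (F' @ [Node d G0])) = Bb F' (theta F') * Bb G0 (theta G0)"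
    by (simp only: theta_snoc Bb_snoc_snoc s1 s2 cf_counitL[where g="\<lambda>r1. Bb F' (theta F') * Bb G0 r1"]) simp
  then show ?case using Snoc.IH by simp
qed

lemma finite_weight_le: "finite {F :: ('d::finite) forest. weight F \<le> n}"
proof (induction n)
  case 0
  have "{F :: 'd forest. weight F \<le> 0} = {[]}" by auto
  then show ?case by simp
next
  case (Suc n)
  let ?S = "{F :: 'd forest. weight F \<le> n}"
  have "{F :: 'd forest. weight F \<le> Suc n} \<subseteq> insert [] ((\<lambda>(d, H, R). Node d H # R) ` (UNIV \<times> ?S \<times> ?S))"
  proof
    fix F :: "'d forest" assume F: "F \<in> {F. weight F \<le> Suc n}"
    show "F \<in> insert [] ((\<lambda>(d, H, R). Node d H # R) ` (UNIV \<times> ?S \<times> ?S))"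
    proof (cases F)
      case (Cons t R)
      obtain d H where "t = Node d H" by (cases t)
      then show ?thesis using F Cons by (auto intro!: image_eqI[where x="(d, H, R)"])
    qed simp
  qed
  moreover have "finite (insert [] ((\<lambda>(d, H, R). Node d H # R) ` (UNIV \<times> ?S \<times> ?S)))"
    using Suc by simp
  ultimately show ?case by (rule finite_subset)
qed

lemma finite_weight_eq: "finite {F :: ('d::finite) forest. weight F = n}"
  by (rule finite_subset[OF _ finite_weight_le[of n]]) auto


lemma Bf_diff_left: "Bf (a - b) c = Bf a c - Bf b c"
  by (simp add: Bf_def sext_minus)
lemma Bf_add_left: "Bf (a + b) c = Bf a c + Bf b c"
  by (simp add: Bf_def sext_add)
lemma Bf_smult_left: "Bf (smult k a) c = k * Bf a c"
  by (simp add: Bf_def sext_smult)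
lemma Bf_sum_left: "Bf (sum f A) c = (\<Sum>a\<in>A. Bf (f a) c)"
  by (simp add: Bf_def sext_sum)
lemma Bf_zero_left[simp]: "Bf 0 c = 0" by (simp add: Bf_def)
lemma Bf_zero_right[simp]: "Bf c 0 = 0" by (simp add: Bf_def)

lemma keys_minus_sub: "ks (a - b) \<subseteq> ks a \<union> ks b"
proof
  fix k assume "k \<in> ks (a - b)"
  then have "lk a k - lk b k \<noteq> 0" by (simp add: in_keys_iff lookup_minus)
  then show "k \<in> ks a \<union> ks b" by (auto simp: in_keys_iff)
qed

lemma keys_sum_sub: "ks (sum f A) \<subseteq> (\<Union>a\<in>A. ks (f a))"
proof (induction A rule: infinite_finite_induct)
  case (insert a A)
  have "ks (sum f (insert a A)) = ks (f a + sum f A)" using insert by simp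
  also have "\<dots> \<subseteq> ks (f a) \<union> ks (sum f A)" by (rule keys_add)
  finally show ?case using insert by auto
qed auto

lemma homog_minus: "homogeneous n a \<Longrightarrow> homogeneous n b \<Longrightarrow> homogeneous n (a - b)"
  unfolding homogeneous_def using keys_minus_sub[of a b] by (meson UnE subsetD)
lemma homog_sum: "(\<And>a. a \<in> A \<Longrightarrow> homogeneous n (f a)) \<Longrightarrow> homogeneous n (sum f A)"
  unfolding homogeneous_def using keys_sum_sub[of f A] by (meson UN_E subsetD)
lemma homog_smult: "homogeneous n a \<Longrightarrow> homogeneous n (smult c a)"
  unfolding homogeneous_def using keys_smult[of c a] by (meson subsetD)
lemma homog_basis: "homogeneous (weight F) (basis F)"
  by (simp add: homogeneous_def basis_def)

definition Sset :: "'d forest \<Rightarrow> 'd forest set" where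
  "Sset G = {G'. weight G' = weight G \<and> lef G' G \<and> G' \<noteq> G}"

lemma finite_Sset: "finite (Sset (G :: ('d::finite) forest))"
  by (rule finite_subset[OF _ finite_weight_eq[of "weight G"]]) (auto simp: Sset_def)

lemma Sset_less: assumes "G' \<in> Sset (G :: ('d::finite) forest)" shows "card (Sset G') < card (Sset G)"
proof (rule psubset_card_mono[OF finite_Sset])
  show "Sset G' \<subset> Sset G"
  proof
    show "Sset G' \<subseteq> Sset G"
    proof
      fix G'' assume "G'' \<in> Sset G'"
      then have "weight G'' = weight G'" "lef G'' G'" "G'' \<noteq> G'" by (auto simp: Sset_def)
      moreover have "weight G' = weight G" "lef G' G" "G' \<noteq> G" using assms by (auto simp: Sset_def)
      ultimately have "lef G'' G" "weight G'' = weight G" using lef_trans by auto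
      moreover have "G'' \<noteq> G"
      proof
        assume "G'' = G"
        then have "lef G G'" using \<open>lef G'' G'\<close> by simp
        then have "G = G'" using lef_antisym \<open>lef G' G\<close> by blast
        then show False using \<open>G' \<noteq> G\<close> by simp
      qed
      ultimately show "G'' \<in> Sset G" unfolding Sset_def by blast
    qed
    have "G' \<notin> Sset G'" by (simp add: Sset_def)
    then show "Sset G' \<noteq> Sset G" using assms by blast
  qed
qed

lemma dual_exists: "\<exists>x. homogeneous (weight G) x \<and> (\<forall>K. Bf x (basis K) = (if G = K then 1 else 0))"
  for G :: "('d::finite) forest"
proof (induction "card (Sset G)" arbitrary: G rule: less_induct)
  case less
  have "\<forall>G'\<in>Sset G. \<exists>x. homogeneous (weight G') x \<and> (\<forall>K. Bf x (basis K) = (if G' = K then 1 else 0))"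
    using less Sset_less by blast
  then obtain y where y: "\<And>G'. G' \<in> Sset G \<Longrightarrow> homogeneous (weight G') (y G') \<and> (\<forall>K. Bf (y G') (basis K) = (if G' = K then 1 else 0))"
    by metis
  define x where "x = basis (theta G) - (\<Sum>G'\<in>Sset G. smult (Bb (theta G) G') (y G'))"
  have hom: "homogeneous (weight G) x"
    unfolding x_def
  proof (rule homog_minus)
    show "homogeneous (weight G) (basis (theta G))" using homog_basis[of "theta G"] by simp
    show "homogeneous (weight G) (\<Sum>G'\<in>Sset G. smult (Bb (theta G) G') (y G'))"
      by (rule homog_sum, rule homog_smult) (use y in \<open>auto simp: Sset_def\<close>)
  qed
  have "Bf x (basis K) = (if G = K then 1 else 0)" for K
  proof -
    have "Bf x (basis K) = Bb (theta G) K - (\<Sum>G'\<in>Sset G. Bb (theta G) G' * (if G' = K then 1 else 0))"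
      by (simp add: x_def Bf_diff_left Bf_sum_left Bf_smult_left y cong: sum.cong)
    also have "\<dots> = Bb (theta G) K - (if K \<in> Sset G then Bb (theta G) K else 0)"
      by (simp add: if_distrib sum.delta[OF finite_Sset] cong: if_cong)
    also have "\<dots> = (if G = K then 1 else 0)"
    proof (cases "K \<in> Sset G")
      case True then show ?thesis by (auto simp: Sset_def)
    next
      case False
      show ?thesis
      proof (cases "G = K")
        case True
        then have "K \<notin> Sset G" by (simp add: Sset_def)
        then show ?thesis using True tri2[of "theta G"] by simp
      next
        case GK: False
        have "Bb (theta G) K = 0"
        proof (rule ccontr)
          assume nz: "Bb (theta G) K \<noteq> 0"
          then have "lef K G" using tri1[OF nz] by simp
          moreover have "weight K = weight G" using Bb_weight[OF nz] by simp
          ultimately have "K \<in> Sset G" using GK by (auto simp: Sset_def)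
          then show False using False by simp
        qed
        then show ?thesis using False GK by simp
      qed
    qed
    finally show ?thesis .
  qed
  then show ?case using hom by blast
qed

definition e0 :: "('d::finite) forest \<Rightarrow> 'd H" where
  "e0 G = (SOME x. homogeneous (weight G) x \<and> (\<forall>K. Bf x (basis K) = (if G = K then 1 else 0)))"

lemma e0_prop: "homogeneous (weight G) (e0 G)" "Bf (e0 G) (basis K) = (if G = K then 1 else 0)"
  using someI_ex[OF dual_exists[of G]] unfolding e0_def by blast+

lemma Bf_expand_right: "Bf x y = sext (\<lambda>K. Bf x (basis K)) y"
  by (rule slin_expand[OF slin_Bf_right])
lemma Bf_expand_left: "Bf x y = sext (\<lambda>K. Bf (basis K) y) x"
  by (rule slin_expand[OF slin_Bf_left])

lemma lookup_via_e0: "lk z G = Bf (e0 G) z"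
proof -
  have "Bf (e0 G) z = sext (\<lambda>K. if K = G then 1 else 0) z"
    by (subst Bf_expand_right) (simp add: e0_prop eq_commute)
  then show ?thesis by (simp add: sext_basis_lookup)
qed

lemma nondeg_basis: fixes z :: "('d::finite) H"
  assumes "\<And>G. Bf z (basis G) = 0" shows "z = 0"
proof (rule poly_mapping_eqI)
  fix G
  have "lk z G = Bf z (e0 G)" by (simp add: lookup_via_e0 Bf_sym)
  also have "\<dots> = 0" by (subst Bf_expand_right) (simp add: assms)
  finally show "lk z G = lk 0 G" by simp
qed

lemma dual_unique: fixes x :: "('d::finite) H"
  assumes "\<And>G. Bf x (basis G) = (if F = G then 1 else 0)" shows "x = e0 F"
proof -
  have "x - e0 F = 0"
    by (rule nondeg_basis) (simp add: Bf_diff_left assms e0_prop)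
  then show ?thesis by simp
qed


lemma e_eq_e0: fixes e :: "('d::finite) forest \<Rightarrow> 'd H"
  assumes "\<forall>F G. Bf (e F) (basis G) = (if F = G then 1 else 0)" shows "e = e0"
proof
  fix F show "e F = e0 F" by (rule dual_unique) (use assms in blast)
qed

lemma e0_Nil: "e0 [] = (one :: ('d::finite) H)"
proof -
  have "Bf (one :: 'd H) (basis G) = (if [] = G then 1 else 0)" for G
    by (simp add: Bf_ax1)
  then have "one = e0 ([] :: 'd forest)" by (rule dual_unique)
  then show ?thesis by simp
qed

lemma Bf_basis_Abs_finite: "finite {F. Bf x (basis F) \<noteq> 0}"
  for x :: "('d::finite) H"
proof -
  have "{F. Bf x (basis F) \<noteq> 0} \<subseteq> (\<Union>K\<in>ks x. {F. weight F = weight K})"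
  proof
    fix F assume "F \<in> {F. Bf x (basis F) \<noteq> 0}"
    then have "(\<Sum>K\<in>ks x. lk x K * Bb K F) \<noteq> 0" unfolding Bf_basis_right sext_def by simp
    then obtain K where "K \<in> ks x" "lk x K * Bb K F \<noteq> 0" by (rule sum.not_neutral_contains_not_neutral)
    moreover have "weight K = weight F" using Bb_weight[of K F] \<open>lk x K * Bb K F \<noteq> 0\<close> by auto
    ultimately show "F \<in> (\<Union>K\<in>ks x. {F. weight F = weight K})" by (intro UN_I[of K]) auto
  qed
  moreover have "finite (\<Union>K\<in>ks x. {F :: 'd forest. weight F = weight K})"
    by (intro finite_UN_I finite_keys finite_weight_eq)
  ultimately show ?thesis by (rule finite_subset)
qed

definition cx :: "('d::finite) H \<Rightarrow> ('d forest \<Rightarrow>\<^sub>0 rat)" where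
  "cx x = Abs_poly_mapping (\<lambda>F. Bf x (basis F))"

lemma lookup_cx: "lk (cx x) F = Bf x (basis F)"
  unfolding cx_def using Bf_basis_Abs_finite[of x] by simp

lemma Bf_lext_e0: "Bf (lext e0 c) (basis G) = lk c G"
proof -
  have "Bf (lext e0 c) (basis G) = sext (\<lambda>F. if F = G then 1 else 0) c"
    by (simp add: Bf_lext_left e0_prop)
  then show ?thesis by (simp add: sext_basis_lookup)
qed

lemma e0_basis: "is_basis_of UNIV (e0 :: ('d::finite) forest \<Rightarrow> 'd H)"
  unfolding is_basis_of_def
proof (intro conjI ballI allI)
  fix x :: "'d H"
  have ex: "x = lincomb (cx x) e0"
  proof -
    have "x - lext e0 (cx x) = 0"
      by (rule nondeg_basis) (simp add: Bf_diff_left Bf_lext_e0 lookup_cx)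
    then show ?thesis by (simp add: lincomb_lext)
  qed
  show "\<exists>!c. x = lincomb c e0"
  proof (rule ex1I[of _ "cx x"])
    show "x = lincomb (cx x) e0" by (rule ex)
    fix c assume "x = lincomb c e0"
    then have "lk c G = lk (cx x) G" for G
      using Bf_lext_e0[of c G] by (simp add: lincomb_lext lookup_cx)
    then show "c = cx x" by (rule poly_mapping_eqI)
  qed
qed simp

lemma HH_nondeg: fixes T :: "('d::finite) HH"
  assumes "\<And>A B. sext (\<lambda>pr. Bb A (fst pr) * Bb B (snd pr)) T = 0" shows "T = 0"
proof (rule poly_mapping_eqI)
  fix AB :: "'d forest \<times> 'd forest"
  obtain A B where AB: "AB = (A, B)" by (cases AB)
  have "lk T AB = sext (\<lambda>pr. if pr = (A, B) then 1 else 0) T"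
    by (simp add: sext_basis_lookup AB)
  also have "\<dots> = sext (\<lambda>pr. Bf (e0 A) (basis (fst pr)) * Bf (e0 B) (basis (snd pr))) T"
    by (rule sext_cong) (auto simp: e0_prop)
  also have "\<dots> = sext (\<lambda>pr. sext (\<lambda>K1. sext (\<lambda>K2. Bb K1 (fst pr) * Bb K2 (snd pr)) (e0 B)) (e0 A)) T"
    by (simp only: Bf_prod_basis)
  also have "\<dots> = sext (\<lambda>K1. sext (\<lambda>K2. sext (\<lambda>pr. Bb K1 (fst pr) * Bb K2 (snd pr)) T) (e0 B)) (e0 A)"
  proof -
    have 1: "sext (\<lambda>pr. sext (\<lambda>K2. Bb K1 (fst pr) * Bb K2 (snd pr)) (e0 B)) T
           = sext (\<lambda>K2. sext (\<lambda>pr. Bb K1 (fst pr) * Bb K2 (snd pr)) T) (e0 B)" for K1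
      by (rule sext_swap)
    show ?thesis by (subst sext_swap) (simp only: 1)
  qed
  also have "\<dots> = 0" by (simp add: assms)
  finally show "lk T AB = lk 0 AB" by simp
qed

lemma pair_Delta: "sext (\<lambda>pr. Bb A (fst pr) * Bb B (snd pr)) (Delta x) = Bf x (basis (A @ B))"
proof -
  have "sext (\<lambda>pr. Bb A (fst pr) * Bb B (snd pr)) (Delta x) = pair2 Bf (basis A) (basis B) (Delta x)"
    by (simp add: pair2_sext)
  also have "\<dots> = Bf (mult (basis A) (basis B)) x" by (simp only: Bf_ax2)
  also have "\<dots> = Bf x (basis (A @ B))" by (simp add: Bf_sym)
  finally show ?thesis .
qed

lemma pair_tensor: "sext (\<lambda>pr. Bb A (fst pr) * Bb B (snd pr)) (tensor a b) = Bf a (basis A) * Bf b (basis B)"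
proof -
  have "sext (\<lambda>pr. Bb A (fst pr) * Bb B (snd pr)) (tensor a b) = sext (\<lambda>F. sext (\<lambda>G. Bb A F * Bb B G) b) a"
    by (simp add: tensor_lext sext_lext)
  also have "\<dots> = sext (\<lambda>F. Bb A F * sext (\<lambda>G. Bb B G) b) a"
    by (simp only: sext_mult_left)
  also have "\<dots> = sext (\<lambda>F. Bb A F) a * sext (\<lambda>G. Bb B G) b"
    by (simp only: sext_mult_right)
  also have "\<dots> = Bf a (basis A) * Bf b (basis B)"
    by (simp add: Bf_basis_right Bb_sym)
  finally show ?thesis .
qed

lemma take_drop_count: "(\<Sum>i = 0..length ts. (if take i ts = A then 1 else 0) * (if drop i ts = B then 1 else 0 :: rat))
   = (if ts = A @ B then 1 else 0)"
proof -
  have "(\<Sum>i = 0..length ts. (if take i ts = A then 1 else 0) * (if drop i ts = B then 1 else 0 :: rat))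
      = (\<Sum>i = 0..length ts. (if i = length A then (if ts = A @ B then 1 else 0) else 0))"
  proof (rule sum.cong[OF refl])
    fix i assume i: "i \<in> {0..length ts}"
    show "(if take i ts = A then 1 else 0) * (if drop i ts = B then 1 else 0 :: rat) = (if i = length A then (if ts = A @ B then 1 else 0) else 0)"
    proof (cases "take i ts = A \<and> drop i ts = B")
      case True
      have "length (take i ts) = i" using i by simp
      then have "ts = A @ B" "i = length A" using True append_take_drop_id[of i ts] by auto
      then show ?thesis using True by simp
    next
      case False
      then have "\<not> (i = length A \<and> ts = A @ B)" by auto
      then show ?thesis using False by auto
    qed
  qed
  also have "\<dots> = (if ts = A @ B then 1 else 0)"
    by (simp add: sum.delta')
  finally show ?thesis .
qed

lemma e0_Delta: "Delta (e0 ts) = (\<Sum>i = 0..length ts. tensor (e0 (take i ts)) (e0 (drop i ts)))"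
  for ts :: "('d::finite) forest"
proof -
  let ?T = "\<Sum>i = 0..length ts. tensor (e0 (take i ts)) (e0 (drop i ts))"
  have "Delta (e0 ts) - ?T = 0"
  proof (rule HH_nondeg)
    fix A B :: "'d forest"
    have "sext (\<lambda>pr. Bb A (fst pr) * Bb B (snd pr)) ?T = (\<Sum>i = 0..length ts. (if take i ts = A then 1 else 0) * (if drop i ts = B then 1 else 0 :: rat))"
      by (simp add: sext_sum pair_tensor e0_prop)
    also have "\<dots> = Bf (e0 ts) (basis (A @ B))"
      by (simp add: take_drop_count e0_prop)
    finally show "sext (\<lambda>pr. Bb A (fst pr) * Bb B (snd pr)) (Delta (e0 ts) - ?T) = 0"
      by (simp add: sext_minus pair_Delta)
  qed
  then show ?thesis by simp
qed


lemma prim_e0: "primitive (e0 [t] :: ('d::finite) H)"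
proof -
  have "Delta (e0 [t] :: 'd H) = tensor (e0 []) (e0 [t]) + tensor (e0 [t]) (e0 [])"
    by (simp add: e0_Delta)
  then show ?thesis by (simp add: primitive_def e0_Nil add.commute)
qed

lemma prim_split: assumes "primitive x"
  shows "Bf x (basis (A @ B)) = Bf x (basis A) * (if B = [] then 1 else 0) + (if A = [] then 1 else 0) * Bf x (basis B)"
proof -
  have "Bf x (basis (A @ B)) = sext (\<lambda>pr. Bb A (fst pr) * Bb B (snd pr)) (Delta x)"
    by (simp add: pair_Delta)
  also have "\<dots> = Bf x (basis A) * Bf one (basis B) + Bf one (basis A) * Bf x (basis B)"
    using assms by (simp add: primitive_def sext_add pair_tensor)
  also have "\<dots> = Bf x (basis A) * (if B = [] then 1 else 0) + (if A = [] then 1 else 0) * Bf x (basis B)"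
    by (simp add: Bf_ax1)
  finally show ?thesis .
qed

lemma prim_coeff_zero: assumes "primitive x" "\<forall>t. F \<noteq> [t]" shows "Bf x (basis F) = 0"
proof (cases F)
  case Nil
  have "Bf x (basis ([] @ [])) = Bf x (basis []) + Bf x (basis [])"
    using prim_split[OF assms(1), of "[]" "[]"] by simp
  then show ?thesis using Nil by simp
next
  case (Cons t F')
  then have "F' \<noteq> []" using assms(2) by auto
  then show ?thesis using prim_split[OF assms(1), of "[t]" F'] Cons by simp
qed

lemma finite_single_support: "finite {t. Bf x (basis [t]) \<noteq> 0}" for x :: "('d::finite) H"
proof -
  have "{t. Bf x (basis [t]) \<noteq> 0} = (\<lambda>t. [t]) -` {F. Bf x (basis F) \<noteq> 0}" by auto
  then show ?thesis using finite_vimageI[OF Bf_basis_Abs_finite[of x], of "\<lambda>t. [t]"] by (simp add: inj_on_def)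
qed

definition ct :: "('d::finite) H \<Rightarrow> ('d ptree \<Rightarrow>\<^sub>0 rat)" where
  "ct x = Abs_poly_mapping (\<lambda>t. Bf x (basis [t]))"

lemma lookup_ct: "lk (ct x) t = Bf x (basis [t])"
  unfolding ct_def using finite_single_support[of x] by simp

lemma Bf_lext_e0_single: "Bf (lext (\<lambda>t. e0 [t]) c) (basis G) = (if \<exists>u. G = [u] then lk c (hd G) else 0)"
proof -
  have "Bf (lext (\<lambda>t. e0 [t]) c) (basis G) = sext (\<lambda>t. if [t] = G then 1 else 0) c"
    by (simp add: Bf_lext_left e0_prop)
  also have "\<dots> = (if \<exists>u. G = [u] then lk c (hd G) else 0)"
  proof (cases "\<exists>u. G = [u]")
    case True
    then obtain u where u: "G = [u]" by blast
    have "sext (\<lambda>t. if [t] = G then 1 else 0) c = sext (\<lambda>t. if t = u then 1 else 0) c"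
      using u by simp
    then show ?thesis using u by (simp add: sext_basis_lookup)
  next
    case False
    then have "(\<lambda>t. if [t] = G then 1 else (0::rat)) = (\<lambda>t. 0)" by (auto simp: fun_eq_iff)
    then show ?thesis using False by simp
  qed
  finally show ?thesis .
qed

lemma prim_basis: "is_basis_of {x. primitive x} (\<lambda>t. e0 [t] :: ('d::finite) H)"
  unfolding is_basis_of_def
proof (intro conjI allI ballI)
  fix t show "(e0 [t] :: 'd H) \<in> {x. primitive x}" using prim_e0 by simp
next
  fix x :: "'d H" assume "x \<in> {x. primitive x}"
  then have px: "primitive x" by simp
  have ex: "x = lincomb (ct x) (\<lambda>t. e0 [t])"
  proof -
    have "x - lext (\<lambda>t. e0 [t]) (ct x) = 0"
    proof (rule nondeg_basis)
      fix G
      show "Bf (x - lext (\<lambda>t. e0 [t]) (ct x)) (basis G) = 0"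
      proof (cases "\<exists>u. G = [u]")
        case True then show ?thesis by (auto simp: Bf_diff_left Bf_lext_e0_single lookup_ct)
      next
        case False then show ?thesis
          by (simp add: Bf_diff_left Bf_lext_e0_single prim_coeff_zero[OF px])
      qed
    qed
    then show ?thesis by (simp add: lincomb_lext)
  qed
  show "\<exists>!c. x = lincomb c (\<lambda>t. e0 [t])"
  proof (rule ex1I[of _ "ct x"])
    show "x = lincomb (ct x) (\<lambda>t. e0 [t])" by (rule ex)
    fix c assume c: "x = lincomb c (\<lambda>t. e0 [t])"
    have "lk c u = lk (ct x) u" for u
      using Bf_lext_e0_single[of c "[u]"] c by (simp add: lincomb_lext lookup_ct)
    then show "c = ct x" by (rule poly_mapping_eqI)
  qed
qed


lemma cf_weight_lt_snd: "c \<in> set (cf F) \<Longrightarrow> snd c \<noteq> [] \<Longrightarrow> weight (fst c) < weight F"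
proof -
  assume a: "c \<in> set (cf F)" "snd c \<noteq> []"
  then have "weight (snd c) \<noteq> 0" by simp
  moreover have "weight (fst c) + weight (snd c) = weight F" using cf_weight[of "fst c" "snd c" F] a by simp
  ultimately show ?thesis by linarith
qed
lemma cf_weight_lt_fst: "c \<in> set (cf F) \<Longrightarrow> fst c \<noteq> [] \<Longrightarrow> weight (snd c) < weight F"
proof -
  assume a: "c \<in> set (cf F)" "fst c \<noteq> []"
  then have "weight (fst c) \<noteq> 0" by simp
  moreover have "weight (fst c) + weight (snd c) = weight F" using cf_weight[of "fst c" "snd c" F] a by simp
  ultimately show ?thesis by linarith
qed

function Sb :: "'d forest \<Rightarrow> 'd H" where
  "Sb F = (if F = [] then one else
     - sum_list (map (\<lambda>c. if snd c = [] then 0 else mult (Sb (fst c)) (basis (snd c))) (cf F)))"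
  by pat_completeness auto
termination by (relation "measure weight") (auto intro: cf_weight_lt_snd)

function Sb' :: "'d forest \<Rightarrow> 'd H" where
  "Sb' F = (if F = [] then one else
     - sum_list (map (\<lambda>c. if fst c = [] then 0 else mult (basis (fst c)) (Sb' (snd c))) (cf F)))"
  by pat_completeness auto
termination by (relation "measure weight") (auto intro: cf_weight_lt_fst)

declare Sb.simps[simp del] Sb'.simps[simp del]

definition cb :: "('d forest \<Rightarrow> 'd H) \<Rightarrow> ('d forest \<Rightarrow> 'd H) \<Rightarrow> 'd forest \<Rightarrow> 'd H" where
  "cb f g F = sum_list (map (\<lambda>c. mult (f (fst c)) (g (snd c))) (cf F))"

definition ee :: "'d forest \<Rightarrow> 'd H" where
  "ee F = (if F = [] then one else 0)"

lemma SL_split_if: "sum_list (map f L) = sum_list (map (\<lambda>c. if P c then f c else 0) L) + sum_list (map (\<lambda>c. if P c then 0 else f c) L)"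
  for f :: "_ \<Rightarrow> 'c::comm_monoid_add"
  by (induction L) (auto simp: algebra_simps)

lemma basis_Nil_one: "basis [] = one" by (simp add: one_def)

lemma cb_Sb_left: "cb Sb basis F = ee F"
proof (cases "F = []")
  case True then show ?thesis by (simp add: cb_def ee_def Sb.simps basis_Nil_one)
next
  case False
  have "cb Sb basis F = sum_list (map (\<lambda>c. if snd c = [] then mult (Sb (fst c)) (basis (snd c)) else 0) (cf F))
     + sum_list (map (\<lambda>c. if snd c = [] then 0 else mult (Sb (fst c)) (basis (snd c))) (cf F))"
    unfolding cb_def by (rule SL_split_if)
  also have "sum_list (map (\<lambda>c. if snd c = [] then mult (Sb (fst c)) (basis (snd c)) else 0) (cf F)) = Sb F"
    using cf_counitR[of "\<lambda>p. mult (Sb p) (basis [])" F] by (simp add: split_def basis_Nil_one cong: if_cong)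
  finally show ?thesis using False by (subst (asm) (2) Sb.simps) (simp add: ee_def)
qed

lemma cb_Sb'_right: "cb basis Sb' F = ee F"
proof (cases "F = []")
  case True then show ?thesis by (simp add: cb_def ee_def Sb'.simps basis_Nil_one)
next
  case False
  have "cb basis Sb' F = sum_list (map (\<lambda>c. if fst c = [] then mult (basis (fst c)) (Sb' (snd c)) else 0) (cf F))
     + sum_list (map (\<lambda>c. if fst c = [] then 0 else mult (basis (fst c)) (Sb' (snd c))) (cf F))"
    unfolding cb_def by (rule SL_split_if)
  also have "sum_list (map (\<lambda>c. if fst c = [] then mult (basis (fst c)) (Sb' (snd c)) else 0) (cf F)) = Sb' F"
    using cf_counitL[of "\<lambda>r. mult (basis []) (Sb' r)" F] by (simp add: split_def basis_Nil_one cong: if_cong)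
  finally show ?thesis using False by (subst (asm) (2) Sb'.simps) (simp add: ee_def)
qed

lemma mult_ee_left: "mult (ee p) x = (if p = [] then x else 0)" by (simp add: ee_def)
lemma mult_ee_right: "mult x (ee p) = (if p = [] then x else 0)" by (simp add: ee_def)

lemma inverse_unique:
  assumes l: "\<And>p. cb f basis p = ee p" and r: "\<And>p. cb basis g p = ee p"
  shows "f F = g F"
proof -
  let ?S = "\<lambda>L h. sum_list (map h L)"
  have "f F = ?S (cf F) (\<lambda>(p, r). mult (f p) (cb basis g r))"
    using cf_counitR[of f F] by (simp add: r mult_ee_right split_def cong: if_cong)
  also have "\<dots> = ?S (cf F) (\<lambda>(p, r). ?S (cf r) (\<lambda>(a, b). mult (f p) (mult (basis a) (g b))))"
    by (simp add: cb_def mult_sum_list_right split_def)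
  also have "\<dots> = ?S (cf F) (\<lambda>(p, r). ?S (cf p) (\<lambda>(a, b). mult (f a) (mult (basis b) (g r))))"
    by (rule cf_coassoc[symmetric, where f="\<lambda>a b c. mult (f a) (mult (basis b) (g c))"])
  also have "\<dots> = ?S (cf F) (\<lambda>(p, r). mult (cb f basis p) (g r))"
    by (simp add: cb_def mult_sum_list_left split_def mult_assoc)
  also have "\<dots> = g F"
    using cf_counitL[of g F] by (simp add: l mult_ee_left split_def cong: if_cong)
  finally show ?thesis .
qed

lemma Sb_eq_Sb': "Sb F = Sb' F"
  by (rule inverse_unique[OF cb_Sb_left cb_Sb'_right])

lemma cb_Sb_right: "cb basis Sb F = ee F"
proof -
  show ?thesis using cb_Sb'_right[of F] by (simp add: cb_def Sb_eq_Sb')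
qed


subsection \<open>The antipode\<close>

lemma conv_basis: "conv f g (basis F) = cb (\<lambda>p. f (basis p)) (\<lambda>r. g (basis r)) F"
  by (simp add: conv_lext Delta_basis Dl_def lext_SL_single cb_def)

lemma conv_lin: "conv f g x = lext (\<lambda>F. conv f g (basis F)) x"
  by (simp add: conv_lext Delta_lext lext_lext)

lemma smult_eps_one: "smult (eps x) one = lext ee x"
proof (rule linear_map_eqI[where T="\<lambda>x. smult (eps x) one" and T'="lext ee"])
  show "linear_map (\<lambda>x. smult (eps x) one)"
    by (simp add: linear_map_def eps_add smult_add_left eps_smult)
  show "linear_map (lext ee)" by (rule linear_map_lext)
  fix k show "smult (eps (basis k)) one = lext ee (basis k)" by (simp add: ee_def)
qed

definition Sant :: "'d H \<Rightarrow> 'd H" where "Sant x = lext Sb x"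

lemma Sant_is_antipode: "is_antipode Sant"
  unfolding is_antipode_def
proof (intro conjI allI)
  show "linear_map Sant" unfolding Sant_def by (rule linear_map_lext)
  fix x
  show "conv Sant id x = smult (eps x) one"
    by (simp add: conv_lin[of Sant] conv_basis Sant_def cb_Sb_left smult_eps_one)
  show "conv id Sant x = smult (eps x) one"
    by (simp add: conv_lin[of id] conv_basis Sant_def cb_Sb_right smult_eps_one)
qed

lemma antipode_unique: assumes "is_antipode S2" shows "S2 = Sant"
proof
  fix x
  have lin: "linear_map S2" and l: "\<And>x. conv S2 id x = smult (eps x) one"
    using assms by (auto simp: is_antipode_def)
  have "S2 (basis F) = Sb F" for F
  proof (rule inverse_unique[where g=Sb])
    fix p
    have "cb (\<lambda>p. S2 (basis p)) basis p = conv S2 id (basis p)" by (simp add: conv_basis)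
    also have "\<dots> = ee p" by (simp add: l ee_def)
    finally show "cb (\<lambda>p. S2 (basis p)) basis p = ee p" .
  next
    fix p show "cb basis Sb p = ee p" by (rule cb_Sb_right)
  qed
  then show "S2 x = Sant x"
    by (subst linear_map_expand[OF lin]) (simp add: Sant_def)
qed

lemma antipode_eq: "antipode = Sant"
  unfolding antipode_def
  by (rule the_equality) (rule Sant_is_antipode, erule antipode_unique)

subsection \<open>Adjointness\<close>

definition cv2 :: "('d forest \<Rightarrow> 'd forest \<Rightarrow> rat) \<Rightarrow> ('d forest \<Rightarrow> 'd forest \<Rightarrow> rat) \<Rightarrow> 'd forest \<Rightarrow> 'd forest \<Rightarrow> rat" where
  "cv2 P Q F G = sum_list (map (\<lambda>c. sum_list (map (\<lambda>c'. P (fst c) (fst c') * Q (snd c) (snd c')) (cf G))) (cf F))"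

definition e2 :: "'d forest \<Rightarrow> 'd forest \<Rightarrow> rat" where
  "e2 F G = (if F = [] \<and> G = [] then 1 else 0)"

lemma cv2_unit_right_inner: "sum_list (map (\<lambda>c'. P p (fst c') * e2 r (snd c')) (cf G)) = (if r = [] then P p G else 0)"
proof -
  have h: "sum_list (map (\<lambda>c'. if snd c' = [] then P p (fst c') else 0) (cf G)) = P p G"
    using cf_counitR[of "\<lambda>q. P p q" G] by (simp add: split_def)
  have eq: "(\<lambda>c'. P p (fst c') * e2 r (snd c')) = (\<lambda>c'. if r = [] then (if snd c' = [] then P p (fst c') else 0) else 0)"
    by (auto simp: e2_def fun_eq_iff)
  show ?thesis unfolding eq by (cases "r = []") (simp_all add: h)
qed

lemma cv2_unit_right: "cv2 P e2 F G = P F G"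
proof -
  have "cv2 P e2 F G = sum_list (map (\<lambda>c. if snd c = [] then P (fst c) G else 0) (cf F))"
    by (simp add: cv2_def cv2_unit_right_inner)
  also have "\<dots> = P F G" using cf_counitR[of "\<lambda>p. P p G" F] by (simp add: split_def)
  finally show ?thesis .
qed

lemma cv2_unit_left_inner: "sum_list (map (\<lambda>c'. e2 p (fst c') * Q r (snd c')) (cf G)) = (if p = [] then Q r G else 0)"
proof -
  have h: "sum_list (map (\<lambda>c'. if fst c' = [] then Q r (snd c') else 0) (cf G)) = Q r G"
    using cf_counitL[of "\<lambda>q. Q r q" G] by (simp add: split_def)
  have eq: "(\<lambda>c'. e2 p (fst c') * Q r (snd c')) = (\<lambda>c'. if p = [] then (if fst c' = [] then Q r (snd c') else 0) else 0)"
    by (auto simp: e2_def fun_eq_iff)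
  show ?thesis unfolding eq by (cases "p = []") (simp_all add: h)
qed

lemma cv2_unit_left: "cv2 e2 Q F G = Q F G"
proof -
  have "cv2 e2 Q F G = sum_list (map (\<lambda>c. if fst c = [] then Q (snd c) G else 0) (cf F))"
    by (simp add: cv2_def cv2_unit_left_inner)
  also have "\<dots> = Q F G" using cf_counitL[of "\<lambda>r. Q r G" F] by (simp add: split_def)
  finally show ?thesis .
qed

lemma cf_coassoc': fixes f :: "_ \<Rightarrow> _ \<Rightarrow> _ \<Rightarrow> 'c::comm_monoid_add"
  shows "sum_list (map (\<lambda>c. sum_list (map (\<lambda>a. f (fst a) (snd a) (snd c)) (cf (fst c)))) (cf F))
       = sum_list (map (\<lambda>c. sum_list (map (\<lambda>a. f (fst c) (fst a) (snd a)) (cf (snd c)))) (cf F))"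
  using cf_coassoc[of f F] by (simp add: split_def)

lemma cv2_assoc: "cv2 (cv2 P Q) R F G = cv2 P (cv2 Q R) F G"
proof -
  let ?S = "\<lambda>L h. sum_list (map h L)"
  have "cv2 (cv2 P Q) R F G = ?S (cf F) (\<lambda>c. ?S (cf G) (\<lambda>c'. ?S (cf (fst c)) (\<lambda>a. ?S (cf (fst c')) (\<lambda>a'.
          P (fst a) (fst a') * Q (snd a) (snd a') * R (snd c) (snd c')))))"
    by (simp add: cv2_def sum_list_mult_const)
  also have "\<dots> = ?S (cf F) (\<lambda>c. ?S (cf (fst c)) (\<lambda>a. ?S (cf G) (\<lambda>c'. ?S (cf (fst c')) (\<lambda>a'.
          P (fst a) (fst a') * Q (snd a) (snd a') * R (snd c) (snd c')))))"
  proof -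
    have 1: "?S (cf G) (\<lambda>c'. ?S (cf (fst c)) (\<lambda>a. ?S (cf (fst c')) (\<lambda>a'.
          P (fst a) (fst a') * Q (snd a) (snd a') * R (snd c) (snd c'))))
        = ?S (cf (fst c)) (\<lambda>a. ?S (cf G) (\<lambda>c'. ?S (cf (fst c')) (\<lambda>a'.
          P (fst a) (fst a') * Q (snd a) (snd a') * R (snd c) (snd c'))))" for c
      by (rule SL_swap)
    show ?thesis by (simp only: 1)
  qed
  also have "\<dots> = ?S (cf F) (\<lambda>c. ?S (cf (fst c)) (\<lambda>a. ?S (cf G) (\<lambda>c'. ?S (cf (snd c')) (\<lambda>a'.
          P (fst a) (fst c') * Q (snd a) (fst a') * R (snd c) (snd a')))))"
  proof -
    have 1: "?S (cf G) (\<lambda>c'. ?S (cf (fst c')) (\<lambda>a'. P x (fst a') * Q y (snd a') * R z (snd c')))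
        = ?S (cf G) (\<lambda>c'. ?S (cf (snd c')) (\<lambda>a'. P x (fst c') * Q y (fst a') * R z (snd a')))" for x y z
      by (rule cf_coassoc'[where f="\<lambda>u v w. P x u * Q y v * R z w"])
    show ?thesis by (simp only: 1)
  qed
  also have "\<dots> = ?S (cf F) (\<lambda>c. ?S (cf (snd c)) (\<lambda>a. ?S (cf G) (\<lambda>c'. ?S (cf (snd c')) (\<lambda>a'.
          P (fst c) (fst c') * Q (fst a) (fst a') * R (snd a) (snd a')))))"
    by (rule cf_coassoc'[where f="\<lambda>x y z. ?S (cf G) (\<lambda>c'. ?S (cf (snd c')) (\<lambda>a'. P x (fst c') * Q y (fst a') * R z (snd a')))"])
  also have "\<dots> = ?S (cf F) (\<lambda>c. ?S (cf G) (\<lambda>c'. ?S (cf (snd c)) (\<lambda>a. ?S (cf (snd c')) (\<lambda>a'.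
          P (fst c) (fst c') * Q (fst a) (fst a') * R (snd a) (snd a')))))"
  proof -
    have 1: "?S (cf (snd c)) (\<lambda>a. ?S (cf G) (\<lambda>c'. ?S (cf (snd c')) (\<lambda>a'.
          P (fst c) (fst c') * Q (fst a) (fst a') * R (snd a) (snd a'))))
        = ?S (cf G) (\<lambda>c'. ?S (cf (snd c)) (\<lambda>a. ?S (cf (snd c')) (\<lambda>a'.
          P (fst c) (fst c') * Q (fst a) (fst a') * R (snd a) (snd a'))))" for c
      by (rule SL_swap)
    show ?thesis by (simp only: 1)
  qed
  also have "\<dots> = cv2 P (cv2 Q R) F G"
    by (simp add: cv2_def sum_list_const_mult mult.assoc)
  finally show ?thesis .
qed

lemma Bf_SL_left: "Bf (sum_list (map f L)) y = sum_list (map (\<lambda>l. Bf (f l) y) L)"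
  by (induction L) (auto simp: Bf_add_left)

lemma pair2_Delta_basis: "pair2 Bf a b (Delta (basis F)) = sum_list (map (\<lambda>c. Bf a (basis (fst c)) * Bf b (basis (snd c))) (cf F))"
  by (simp add: pair2_sext Delta_basis Dl_def sext_SL_single)

lemma Bf_ee: "Bf (ee G) (basis F) = e2 F G"
  by (simp add: ee_def e2_def Bf_ax1)

lemma cv2_L2: "cv2 (\<lambda>F G. Bf (basis F) (Sb G)) Bb F G = e2 F G"
proof -
  have "cv2 (\<lambda>F G. Bf (basis F) (Sb G)) Bb F G
      = sum_list (map (\<lambda>c'. sum_list (map (\<lambda>c. Bf (Sb (fst c')) (basis (fst c)) * Bf (basis (snd c')) (basis (snd c))) (cf F))) (cf G))"
    unfolding cv2_def by (subst SL_swap) (simp add: Bf_sym Bb_sym)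
  also have "\<dots> = sum_list (map (\<lambda>c'. Bf (mult (Sb (fst c')) (basis (snd c'))) (basis F)) (cf G))"
    by (simp add: Bf_ax2 pair2_Delta_basis)
  also have "\<dots> = Bf (cb Sb basis G) (basis F)"
    by (simp add: cb_def Bf_SL_left)
  also have "\<dots> = e2 F G" by (simp add: cb_Sb_left Bf_ee)
  finally show ?thesis .
qed

lemma cv2_L1: "cv2 Bb (\<lambda>F G. Bf (Sb F) (basis G)) F G = e2 F G"
proof -
  have "cv2 Bb (\<lambda>F G. Bf (Sb F) (basis G)) F G
      = sum_list (map (\<lambda>c. sum_list (map (\<lambda>c'. Bf (basis (fst c)) (basis (fst c')) * Bf (Sb (snd c)) (basis (snd c'))) (cf G))) (cf F))"
    by (simp add: cv2_def)
  also have "\<dots> = sum_list (map (\<lambda>c. Bf (mult (basis (fst c)) (Sb (snd c))) (basis G)) (cf F))"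
    by (simp only: Bf_ax2 pair2_Delta_basis)
  also have "\<dots> = Bf (cb basis Sb F) (basis G)"
    by (simp add: cb_def Bf_SL_left)
  also have "\<dots> = e2 F G" by (simp add: cb_Sb_right Bf_ee e2_def)
  finally show ?thesis .
qed

lemma Sb_adjoint: fixes F G :: "'d forest" shows "Bf (basis F) (Sb G) = Bf (Sb F) (basis G)"
proof -
  let ?L2 = "\<lambda>F G :: 'd forest. Bf (basis F) (Sb G)" and ?L1 = "\<lambda>F G :: 'd forest. Bf (Sb F) (basis G)"
  have e1: "(e2 :: 'd forest \<Rightarrow> _) = cv2 Bb ?L1" by (intro ext) (rule cv2_L1[symmetric])
  have e2': "cv2 ?L2 Bb = (e2 :: 'd forest \<Rightarrow> _)" by (intro ext) (rule cv2_L2)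
  have "?L2 F G = cv2 ?L2 e2 F G" by (simp add: cv2_unit_right)
  also have "\<dots> = cv2 ?L2 (cv2 Bb ?L1) F G"
    by (simp only: e1)
  also have "\<dots> = cv2 (cv2 ?L2 Bb) ?L1 F G" by (simp only: cv2_assoc)
  also have "\<dots> = cv2 e2 ?L1 F G" by (simp only: e2')
  also have "\<dots> = ?L1 F G" by (simp add: cv2_unit_left)
  finally show ?thesis by simp
qed

lemma antipode_adjoint: "Bf (antipode x) y = Bf x (antipode y)"
proof -
  have "Bf (antipode x) y = sext (\<lambda>F. sext (\<lambda>G. Bf (Sb F) (basis G)) y) x"
    by (simp add: antipode_eq Sant_def Bf_lext_left, rule sext_cong, rule Bf_expand_right)
  also have "\<dots> = sext (\<lambda>G. sext (\<lambda>F. Bf (basis F) (Sb G)) x) y"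
    by (subst sext_swap) (simp add: Sb_adjoint)
  also have "\<dots> = Bf x (antipode y)"
    by (simp add: antipode_eq Sant_def Bf_lext_right, rule sext_cong, rule Bf_expand_left[symmetric])
  finally show ?thesis .
qed


theorem mainTheorem4:
  fixes dummy :: "'d::finite"
  shows "(\<exists>!B :: 'd H \<Rightarrow> 'd H \<Rightarrow> rat. form_axioms B) \<and>
    (\<forall>B :: 'd H \<Rightarrow> 'd H \<Rightarrow> rat. form_axioms B \<longrightarrow>
       (\<forall>n m x y. homogeneous n x \<and> homogeneous m y \<and> n \<noteq> m \<longrightarrow> B x y = 0) \<and>
       (\<forall>x y. B x y = B y x) \<and>
       (\<forall>x. (\<forall>y. B x y = 0) \<longrightarrow> x = 0) \<and>
       (\<forall>y. (\<forall>x. B x y = 0) \<longrightarrow> y = 0) \<and>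
       (\<forall>x y. B (antipode x) y = B x (antipode y)) \<and>
       (\<exists>e :: 'd forest \<Rightarrow> 'd H. \<forall>F G. B (e F) (basis G) = (if F = G then 1 else 0)) \<and>
       (\<forall>e :: 'd forest \<Rightarrow> 'd H. (\<forall>F G. B (e F) (basis G) = (if F = G then 1 else 0)) \<longrightarrow>
          is_basis_of UNIV e \<and>
          (\<forall>F. homogeneous (weight F) (e F)) \<and>
          is_basis_of {x. primitive x} (\<lambda>t :: 'd ptree. e [t]) \<and>
          (\<forall>ts. Delta (e ts) = (\<Sum>i = 0..length ts. tensor (e (take i ts)) (e (drop i ts))))))"
proof (intro conjI allI impI)
  show "\<exists>!B :: 'd H \<Rightarrow> 'd H \<Rightarrow> rat. form_axioms B"
    by (rule ex1I[of _ Bf]) (rule Bf_form_axioms, erule form_unique)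
next
  fix B :: "'d H \<Rightarrow> 'd H \<Rightarrow> rat"
  assume "form_axioms B"
  then have B: "B = Bf" by (rule form_unique)
  {
    fix n m and x y :: "'d H"
    assume "homogeneous n x \<and> homogeneous m y \<and> n \<noteq> m"
    then show "B x y = 0" using B Bf_homog by blast
  next
    fix x y :: "'d H" show "B x y = B y x" using B Bf_sym by simp
  next
    fix x :: "'d H" assume "\<forall>y. B x y = 0"
    then show "x = 0" using B by (intro nondeg_basis) simp
  next
    fix y :: "'d H" assume y0: "\<forall>x. B x y = 0"
    show "y = 0"
    proof (rule nondeg_basis)
      fix G
      have "Bf (basis G) y = 0" using y0 B by simp
      then show "Bf y (basis G) = 0" using Bf_sym[of y "basis G"] by simp
    qed
  next
    fix x y :: "'d H" show "B (antipode x) y = B x (antipode y)" using B antipode_adjoint by simp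
  next
    show "\<exists>e :: 'd forest \<Rightarrow> 'd H. \<forall>F G. B (e F) (basis G) = (if F = G then 1 else 0)"
      using B e0_prop(2) by blast
  next
    fix e :: "'d forest \<Rightarrow> 'd H"
    assume "\<forall>F G. B (e F) (basis G) = (if F = G then 1 else 0)"
    then have e: "e = e0" using B e_eq_e0 by blast
    show "is_basis_of UNIV e" using e e0_basis by simp
    show "homogeneous (weight F) (e F)" for F using e e0_prop(1) by blast
    show "is_basis_of {x. primitive x} (\<lambda>t :: 'd ptree. e [t])" using e prim_basis by simp
    show "Delta (e ts) = (\<Sum>i = 0..length ts. tensor (e (take i ts)) (e (drop i ts)))" for ts
      using e e0_Delta by simp
  }
qed


end
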